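(* Fix reals $\alpha,\beta,\gamma,\delta\ge0$ with $\alpha+\beta+\gamma+\delta=1$, and set $D:=1-4(\alpha\gamma+\alpha\delta+\beta\gamma)$ and $\mu:=(1-\sqrt D)/2$. Consider $n\to\infty$ along integers $n$ for which $l:=\alpha n$, $m:=(\alpha+\beta)n$, $k:=(\alpha+\gamma)n$ are integers, and let $X$ be distributed according to $p(\cdot\mid n,m,k,l)$, with probability denoted $\Pr_n$. Then for every $\varepsilon>0$, \[ \lim_{n\to\infty}\Pr_n\Bigl[\Bigl|\frac{X}{n}-\mu\Bigr|>\varepsilon\Bigr]=0, \] and consequently $\mathbb E[X]=n\mu+o(n)$.
   Context: For non-negative integers $n,m,k,l$ with $m,k\le n$ and $m+k-n\le l\le\min(m,k)$ (automatic above), let $M:=m-l$, $N:=n-m-k+l$. Let $\mathbb{C}^2$ have orthonormal basis $|0\rangle,|1\rangle$ and give $(\mathbb{C}^2)^{\otimes n}$ the induced Hermitian inner product. Define $|\Xi_{n,m|k,l}\rangle:=|1\rangle^{\otimes l}\otimes|0\rangle^{\otimes(k-l)}\otimes\binom{M+N}{M}^{-1/2}\sum_{I}|I\rangle$, the sum over all $I\in\{0,1\}^{n-k}$ with exactly $M$ ones (where $|i_1\cdots i_r\rangle=|i_1\rangle\otimes\cdots\otimes|i_r\rangle$). $\mathfrak S_n$ acts on $(\mathbb{C}^2)^{\otimes n}$ by permuting tensor factors. For $0\le x\le\lfloor n/2\rfloor$, $\mathsf P_{(n-x,x)}$ is the orthogonal projection onto the isotypic component of the irreducible $\mathfrak S_n$-representation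 labelled by the partition $(n-x,x)$, and $p(x\mid n,m,k,l):=\langle\Xi_{n,m|k,l}|\mathsf P_{(n-x,x)}|\Xi_{n,m|k,l}\rangle$, a probability mass function on $\{0,\dots,\lfloor n/2\rfloor\}$. *)

theory Defs
  imports Complex_Main "HOL-Library.Landau_Symbols" "HOL-Combinatorics.Permutations"
begin

text \<open>Vectors of (C^2)^{\<otimes>n}: functions on bit strings, a bit string of length n being
  encoded by the set of positions (in 0..n-1) carrying a 1; position i is tensor factor i+1.
  Only values on subsets of {..<n} matter; V_n is the set of vectors supported there.\<close>

type_synonym qvec = "nat set \<Rightarrow> complex"

definition qspace :: "nat \<Rightarrow> qvec set" where
  "qspace n = {v. \<forall>S. \<not> S \<subseteq> {..<n} \<longrightarrow> v S = 0}"

definition qadd :: "qvec \<Rightarrow> qvec \<Rightarrow> qvec" where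
  "qadd u v = (\<lambda>S. u S + v S)"

definition qdiff :: "qvec \<Rightarrow> qvec \<Rightarrow> qvec" where
  "qdiff u v = (\<lambda>S. u S - v S)"

definition qscale :: "complex \<Rightarrow> qvec \<Rightarrow> qvec" where
  "qscale c v = (\<lambda>S. c * v S)"

definition qinner :: "nat \<Rightarrow> qvec \<Rightarrow> qvec \<Rightarrow> complex" where
  "qinner n u v = (\<Sum>S\<in>Pow {..<n}. cnj (u S) * v S)"

definition qspan :: "qvec set \<Rightarrow> qvec set" where
  "qspan A = {(\<lambda>S. \<Sum>i<r. c i * w i S) | (r::nat) c w. \<forall>i<r. w i \<in> A}"

text \<open>Action of a permutation of the tensor factors: sigma maps the basis vector |I> with
  ones at positions T to the basis vector with ones at positions sigma ` T.\<close>
definition perm_act :: "(nat \<Rightarrow> nat) \<Rightarrow> qvec \<Rightarrow> qvec" where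
  "perm_act \<sigma> v = (\<lambda>T. v (inv \<sigma> ` T))"

text \<open>Polytabloid of a two-row tableau with columns (a_i, b_i) (a_i in row 1, b_i in row 2),
  realised inside the permutation module M^{(n-x,x)} = span of basis vectors of weight x:
  it is the tensor product of the vectors |0>_a|1>_b - |1>_a|0>_b over the columns and |0>
  on the remaining positions.\<close>
definition pair_set :: "(nat \<times> nat) list \<Rightarrow> nat set" where
  "pair_set ps = set (map fst ps) \<union> set (map snd ps)"

definition polytabloid :: "(nat \<times> nat) list \<Rightarrow> qvec" where
  "polytabloid ps = (\<lambda>T. if T \<subseteq> pair_set ps \<and> (\<forall>(a,b)\<in>set ps. (a \<in> T \<longleftrightarrow> b \<notin> T))
       then (-1) ^ card (set (map fst ps) \<inter> T) else 0)"

definition tableau_cols :: "nat \<Rightarrow> nat \<Rightarrow> (nat \<times> nat) list set" where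
  "tableau_cols n x = {ps. length ps = x \<and> distinct (map fst ps @ map snd ps) \<and> pair_set ps \<subseteq> {..<n}}"

definition specht :: "nat \<Rightarrow> nat \<Rightarrow> qvec set" where
  "specht n x = qspan (polytabloid ` tableau_cols n x)"

definition equivariant_maps :: "nat \<Rightarrow> nat \<Rightarrow> (qvec \<Rightarrow> qvec) set" where
  "equivariant_maps n x = {f.
      (\<forall>u\<in>specht n x. f u \<in> qspace n) \<and>
      (\<forall>u\<in>specht n x. \<forall>v\<in>specht n x. f (qadd u v) = qadd (f u) (f v)) \<and>
      (\<forall>u\<in>specht n x. \<forall>c. f (qscale c u) = qscale c (f u)) \<and>
      (\<forall>\<sigma> u. \<sigma> permutes {..<n} \<and> u \<in> specht n x \<longrightarrow> f (perm_act \<sigma> u) = perm_act \<sigma> (f u))}"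

definition isotypic :: "nat \<Rightarrow> nat \<Rightarrow> qvec set" where
  "isotypic n x = qspan (\<Union>f\<in>equivariant_maps n x. f ` specht n x)"

definition orth_proj :: "nat \<Rightarrow> qvec set \<Rightarrow> qvec \<Rightarrow> qvec" where
  "orth_proj n W v = (THE w. w \<in> W \<and> (\<forall>u\<in>W. qinner n u (qdiff v w) = 0))"

text \<open>The state Xi_{n,m|k,l}: ones on positions 0..l-1, zeros on positions l..k-1, and the
  normalised uniform superposition of weight-(m-l) strings on positions k..n-1.\<close>
definition Xi :: "nat \<Rightarrow> nat \<Rightarrow> nat \<Rightarrow> nat \<Rightarrow> qvec" where
  "Xi n m k l = (\<lambda>T. if T \<subseteq> {..<n} \<and> T \<inter> {..<k} = {..<l} \<and> card (T - {..<k}) = m - l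
       then complex_of_real (1 / sqrt (real ((n - k) choose (m - l)))) else 0)"

definition pmf_p :: "nat \<Rightarrow> nat \<Rightarrow> nat \<Rightarrow> nat \<Rightarrow> nat \<Rightarrow> real" where
  "pmf_p n m k l x = Re (qinner n (Xi n m k l) (orth_proj n (isotypic n x) (Xi n m k l)))"

end

theory Submission
  imports Defs
begin
definition Rop :: "nat \<Rightarrow> qvec \<Rightarrow> qvec" where
 "Rop n v = (\<lambda>S. if S \<subseteq> {..<n} then (\<Sum>j\<in>S. v (S - {j})) else 0)"
definition Lop :: "nat \<Rightarrow> qvec \<Rightarrow> qvec" where
 "Lop n v = (\<lambda>S. if S \<subseteq> {..<n} then (\<Sum>i\<in>{..<n} - S. v (insert i S)) else 0)"
definition hom :: "nat \<Rightarrow> nat \<Rightarrow> qvec set" where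
 "hom n w = {v \<in> qspace n. \<forall>S. card S \<noteq> w \<longrightarrow> v S = 0}"
definition zv :: qvec where "zv = (\<lambda>S. 0)"
definition subsp :: "qvec set \<Rightarrow> bool" where
 "subsp W \<longleftrightarrow> zv \<in> W \<and> (\<forall>u\<in>W. \<forall>v\<in>W. qadd u v \<in> W) \<and> (\<forall>u\<in>W. \<forall>c. qscale c u \<in> W)"
definition lin :: "(qvec \<Rightarrow> qvec) \<Rightarrow> bool" where
 "lin f \<longleftrightarrow> (\<forall>u v. f (qadd u v) = qadd (f u) (f v)) \<and> (\<forall>c u. f (qscale c u) = qscale c (f u))"

lemma subsp_zero: "subsp W \<Longrightarrow> zv \<in> W" by (simp add: subsp_def)
lemma subsp_add: "subsp W \<Longrightarrow> u \<in> W \<Longrightarrow> v \<in> W \<Longrightarrow> qadd u v \<in> W" by (simp add: subsp_def)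
lemma subsp_scale: "subsp W \<Longrightarrow> u \<in> W \<Longrightarrow> qscale c u \<in> W" by (simp add: subsp_def)
lemma subsp_diff: "subsp W \<Longrightarrow> u \<in> W \<Longrightarrow> v \<in> W \<Longrightarrow> qdiff u v \<in> W"
proof -
  assume a: "subsp W" "u \<in> W" "v \<in> W"
  have "qdiff u v = qadd u (qscale (-1) v)" by (simp add: qdiff_def qadd_def qscale_def)
  then show ?thesis using a by (simp add: subsp_add subsp_scale)
qed

lemma subsp_sum:
  fixes c :: "'a \<Rightarrow> complex"
  assumes "subsp W" "finite A" "\<And>a. a \<in> A \<Longrightarrow> g a \<in> W"
  shows "(\<lambda>S. \<Sum>a\<in>A. c a * g a S) \<in> W"
  using assms(2,3)
proof (induction A rule: finite_induct)
  case empty then show ?case using subsp_zero[OF assms(1)] by (simp add: zv_def)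
next
  case (insert x F)
  have "(\<lambda>S. \<Sum>a\<in>insert x F. c a * g a S) = qadd (qscale (c x) (g x)) (\<lambda>S. \<Sum>a\<in>F. c a * g a S)"
    using insert by (simp add: qadd_def qscale_def)
  then show ?case using insert assms(1) by (simp add: subsp_add subsp_scale)
qed

lemma subsp_sum1:
  assumes "subsp W" "finite A" "\<And>a. a \<in> A \<Longrightarrow> g a \<in> W"
  shows "(\<lambda>S. \<Sum>a\<in>A. g a S) \<in> W"
  using subsp_sum[OF assms, where c = "\<lambda>_. 1"] by simp

lemma sum_lessThan_add_nat: "(\<Sum>i<r1+r2. (f::nat\<Rightarrow>'a::comm_monoid_add) i) = (\<Sum>i<r1. f i) + (\<Sum>i<r2. f (r1 + i))"
  by (induction r2) (simp_all add: add.assoc)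
lemma qspan_subsp: "subsp (qspan A)"
  unfolding subsp_def
proof (intro conjI ballI allI)
  show "zv \<in> qspan A" unfolding qspan_def zv_def by (rule CollectI, rule exI[of _ 0]) auto
next
  fix u v assume "u \<in> qspan A" "v \<in> qspan A"
  then obtain r1 r2 :: nat and c1 c2 w1 w2 where u: "u = (\<lambda>S. \<Sum>i<r1. c1 i * w1 i S)" "\<forall>i<r1. w1 i \<in> A"
    and v: "v = (\<lambda>S. \<Sum>i<r2. c2 i * w2 i S)" "\<forall>i<r2. w2 i \<in> A"
    unfolding qspan_def by blast
  define c where "c i = (if i < r1 then c1 i else c2 (i - r1))" for i
  define w where "w i = (if i < r1 then w1 i else w2 (i - r1))" for i
  have "qadd u v = (\<lambda>S. \<Sum>i<r1+r2. c i * w i S)"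
    unfolding qadd_def u v sum_lessThan_add_nat c_def w_def by simp
  moreover have "\<forall>i<r1+r2. w i \<in> A" using u v unfolding w_def by auto
  ultimately show "qadd u v \<in> qspan A" unfolding qspan_def by blast
next
  fix u c assume "u \<in> qspan A"
  then obtain r1 :: nat and c1 w1 where u: "u = (\<lambda>S. \<Sum>i<r1. c1 i * w1 i S)" "\<forall>i<r1. w1 i \<in> A"
    unfolding qspan_def by blast
  have "qscale c u = (\<lambda>S. \<Sum>i<r1. (c * c1 i) * w1 i S)"
    unfolding qscale_def u by (simp add: sum_distrib_left mult.assoc)
  then show "qscale c u \<in> qspan A" using u(2) unfolding qspan_def
    by (intro CollectI exI[of _ r1] exI[of _ "\<lambda>i. c * c1 i"] exI[of _ w1]) auto
qed

lemma qspan_base: "a \<in> A \<Longrightarrow> a \<in> qspan A"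
  unfolding qspan_def by (rule CollectI, rule exI[of _ 1], rule exI[of _ "\<lambda>_. 1"], rule exI[of _ "\<lambda>_. a"]) auto

lemma qspan_least: assumes "subsp W" "A \<subseteq> W" shows "qspan A \<subseteq> W"
proof
  fix u assume "u \<in> qspan A"
  then obtain r :: nat and c w where u: "u = (\<lambda>S. \<Sum>i<r. c i * w i S)" "\<forall>i<r. w i \<in> A"
    unfolding qspan_def by blast
  show "u \<in> W" unfolding u(1) by (rule subsp_sum[OF assms(1)]) (use u(2) assms(2) in auto)
qed

lemma lin_add: "lin f \<Longrightarrow> f (qadd u v) = qadd (f u) (f v)" by (simp add: lin_def)
lemma lin_scale: "lin f \<Longrightarrow> f (qscale c u) = qscale c (f u)" by (simp add: lin_def)
lemma lin_zero: "lin f \<Longrightarrow> f zv = zv"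
proof -
  assume "lin f"
  have "zv = qscale 0 zv" by (simp add: qscale_def zv_def)
  then have "f zv = qscale 0 (f zv)" using \<open>lin f\<close> by (metis lin_scale)
  then show ?thesis by (simp add: qscale_def zv_def)
qed
lemma lin_diff: "lin f \<Longrightarrow> f (qdiff u v) = qdiff (f u) (f v)"
proof -
  assume a: "lin f"
  have "qdiff u v = qadd u (qscale (-1) v)" "qdiff (f u) (f v) = qadd (f u) (qscale (-1) (f v))"
    by (simp_all add: qdiff_def qadd_def qscale_def)
  then show ?thesis using a by (simp add: lin_add lin_scale)
qed

lemma lin_sum:
  fixes c :: "'a \<Rightarrow> complex"
  assumes "lin f" "finite A"
  shows "f (\<lambda>S. \<Sum>a\<in>A. c a * g a S) = (\<lambda>S. \<Sum>a\<in>A. c a * f (g a) S)"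
  using assms(2)
proof (induction A rule: finite_induct)
  case empty then show ?case using lin_zero[OF assms(1)] by (simp add: zv_def)
next
  case (insert x F)
  have "(\<lambda>S. \<Sum>a\<in>insert x F. c a * g a S) = qadd (qscale (c x) (g x)) (\<lambda>S. \<Sum>a\<in>F. c a * g a S)"
    using insert by (simp add: qadd_def qscale_def)
  then have "f (\<lambda>S. \<Sum>a\<in>insert x F. c a * g a S) = qadd (qscale (c x) (f (g x))) (f (\<lambda>S. \<Sum>a\<in>F. c a * g a S))"
    using assms(1) by (simp add: lin_add lin_scale)
  then show ?case using insert by (simp add: qadd_def qscale_def)
qed

lemma lin_sum1:
  assumes "lin f" "finite A"
  shows "f (\<lambda>S. \<Sum>a\<in>A. g a S) = (\<lambda>S. \<Sum>a\<in>A. f (g a) S)"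
  using lin_sum[OF assms, where c = "\<lambda>_. 1"] by simp

lemma lin_comp: "lin f \<Longrightarrow> lin g \<Longrightarrow> lin (f \<circ> g)" by (simp add: lin_def)
lemma lin_id: "lin id" by (simp add: lin_def)
lemma lin_pow: "lin f \<Longrightarrow> lin (f ^^ j)"
  by (induction j) (simp_all add: lin_id lin_comp)

lemma lin_Rop: "lin (Rop n)"
  by (simp add: lin_def Rop_def qadd_def qscale_def sum.distrib sum_distrib_left fun_eq_iff)
lemma lin_Lop: "lin (Lop n)"
  by (simp add: lin_def Lop_def qadd_def qscale_def sum.distrib sum_distrib_left fun_eq_iff)
lemma lin_perm_act: "lin (perm_act \<sigma>)"
  by (simp add: lin_def perm_act_def qadd_def qscale_def)

lemma subsp_qspace: "subsp (qspace n)"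
  by (simp add: subsp_def qspace_def zv_def qadd_def qscale_def)
lemma subsp_hom: "subsp (hom n w)"
  by (simp add: subsp_def hom_def qspace_def zv_def qadd_def qscale_def)
lemma subsp_Int: "subsp A \<Longrightarrow> subsp B \<Longrightarrow> subsp (A \<inter> B)"
  by (simp add: subsp_def)
lemma subsp_ker: "lin f \<Longrightarrow> subsp {v. f v = zv}"
  using lin_zero by (simp add: subsp_def lin_add lin_scale) (simp add: zv_def qadd_def qscale_def)

lemma qspaceD: "v \<in> qspace n \<Longrightarrow> \<not> S \<subseteq> {..<n} \<Longrightarrow> v S = 0" by (simp add: qspace_def)
lemma homD: "v \<in> hom n w \<Longrightarrow> card S \<noteq> w \<Longrightarrow> v S = 0" by (simp add: hom_def)
lemma homD2: "v \<in> hom n w \<Longrightarrow> \<not> S \<subseteq> {..<n} \<Longrightarrow> v S = 0" by (simp add: hom_def qspace_def)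
lemma hom_qspace: "v \<in> hom n w \<Longrightarrow> v \<in> qspace n" by (simp add: hom_def)

lemma Rop_qspace: "Rop n u \<in> qspace n" by (simp add: Rop_def qspace_def)
lemma Lop_qspace: "Lop n u \<in> qspace n" by (simp add: Lop_def qspace_def)

lemma finite_sub: "(S::nat set) \<subseteq> {..<n} \<Longrightarrow> finite S" by (erule finite_subset) simp

lemma Rop_hom: assumes "u \<in> hom n x" shows "Rop n u \<in> hom n (Suc x)"
  unfolding hom_def
proof (intro CollectI conjI allI impI)
  show "Rop n u \<in> qspace n" by (rule Rop_qspace)
  fix S :: "nat set" assume c: "card S \<noteq> Suc x"
  show "Rop n u S = 0"
  proof (cases "S \<subseteq> {..<n}")
    case True
    then have f: "finite S" by (rule finite_sub)
    have "u (S - {j}) = 0" if "j \<in> S" for j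
    proof -
      have "card (S - {j}) = card S - 1" using that f by simp
      moreover have "card S \<ge> 1" using that f by (metis card_0_eq empty_iff less_one not_le)
      ultimately have "card (S - {j}) \<noteq> x" using c by linarith
      then show ?thesis using assms homD by blast
    qed
    then show ?thesis using True by (simp add: Rop_def)
  qed (simp add: Rop_def)
qed

lemma Lop_hom: assumes "u \<in> hom n x" shows "Lop n u \<in> hom n (x - 1)"
  unfolding hom_def
proof (intro CollectI conjI allI impI)
  show "Lop n u \<in> qspace n" by (rule Lop_qspace)
  fix S :: "nat set" assume c: "card S \<noteq> x - 1"
  show "Lop n u S = 0"
  proof (cases "S \<subseteq> {..<n}")
    case True
    then have f: "finite S" by (rule finite_sub)
    have "u (insert i S) = 0" if "i \<in> {..<n} - S" for i
    proof -
      have "card (insert i S) = Suc (card S)" using that f by simp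
      then have "card (insert i S) \<noteq> x" using c by linarith
      then show ?thesis using assms homD by blast
    qed
    then show ?thesis using True by (simp add: Lop_def)
  qed (simp add: Lop_def)
qed

lemma Lop_hom0: assumes "u \<in> hom n 0" shows "Lop n u = zv"
proof -
  have "u (insert i S) = 0" if "S \<subseteq> {..<n}" "i \<in> {..<n} - S" for i S
  proof -
    have "finite S" using that(1) by (rule finite_sub)
    then have "card (insert i S) \<noteq> 0" by simp
    then show ?thesis using assms homD by blast
  qed
  then show ?thesis by (auto simp: Lop_def zv_def fun_eq_iff)
qed

lemma RL_formula:
  assumes "S \<subseteq> {..<n}"
  shows "Rop n (Lop n u) S = of_nat (card S) * u S + (\<Sum>j\<in>S. \<Sum>i\<in>{..<n} - S. u (insert i (S - {j})))"
proof -
  have f: "finite S" using assms by (rule finite_sub)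
  have "Rop n (Lop n u) S = (\<Sum>j\<in>S. \<Sum>i\<in>{..<n} - (S - {j}). u (insert i (S - {j})))"
    using assms by (simp add: Rop_def Lop_def subset_iff)
  also have "\<dots> = (\<Sum>j\<in>S. u S + (\<Sum>i\<in>{..<n} - S. u (insert i (S - {j}))))"
  proof (rule sum.cong[OF refl])
    fix j assume j: "j \<in> S"
    have e: "{..<n} - (S - {j}) = insert j ({..<n} - S)" using j assms by auto
    have "insert j (S - {j}) = S" using j by auto
    then show "(\<Sum>i\<in>{..<n} - (S - {j}). u (insert i (S - {j}))) = u S + (\<Sum>i\<in>{..<n} - S. u (insert i (S - {j})))"
      unfolding e by (subst sum.insert) auto
  qed
  also have "\<dots> = of_nat (card S) * u S + (\<Sum>j\<in>S. \<Sum>i\<in>{..<n} - S. u (insert i (S - {j})))"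
    by (simp add: sum.distrib)
  finally show ?thesis .
qed

lemma LR_formula:
  assumes "S \<subseteq> {..<n}"
  shows "Lop n (Rop n u) S = of_nat (n - card S) * u S + (\<Sum>j\<in>S. \<Sum>i\<in>{..<n} - S. u (insert i (S - {j})))"
proof -
  have f: "finite S" using assms by (rule finite_sub)
  have "Lop n (Rop n u) S = (\<Sum>i\<in>{..<n} - S. \<Sum>j\<in>insert i S. u (insert i S - {j}))"
    using assms by (simp add: Rop_def Lop_def subset_iff)
  also have "\<dots> = (\<Sum>i\<in>{..<n} - S. u S + (\<Sum>j\<in>S. u (insert i (S - {j}))))"
  proof (rule sum.cong[OF refl])
    fix i assume i: "i \<in> {..<n} - S"
    have "insert i S - {i} = S" using i by auto
    moreover have "insert i S - {j} = insert i (S - {j})" if "j \<in> S" for j using that i by auto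
    ultimately show "(\<Sum>j\<in>insert i S. u (insert i S - {j})) = u S + (\<Sum>j\<in>S. u (insert i (S - {j})))"
      using i f by (simp add: sum.insert)
  qed
  also have "\<dots> = of_nat (card ({..<n} - S)) * u S + (\<Sum>i\<in>{..<n} - S. \<Sum>j\<in>S. u (insert i (S - {j})))"
    by (simp add: sum.distrib)
  also have "card ({..<n} - S) = n - card S" using assms f by (simp add: card_Diff_subset)
  finally show ?thesis by (simp add: sum.swap[of _ "{..<n} - S"])
qed

lemma comm_formula:
  assumes "u \<in> qspace n"
  shows "Lop n (Rop n u) S = Rop n (Lop n u) S + (of_nat n - 2 * of_nat (card S)) * u S"
proof (cases "S \<subseteq> {..<n}")
  case True
  have "card S \<le> n" using True by (metis card_lessThan card_mono finite_lessThan)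
  then have e: "(of_nat (n - card S) :: complex) = of_nat n - of_nat (card S)" by (simp add: of_nat_diff)
  show ?thesis using RL_formula[OF True, of u] LR_formula[OF True, of u] unfolding e by (simp add: algebra_simps)
next
  case False then show ?thesis using assms by (simp add: Rop_def Lop_def qspaceD)
qed

lemma comm_hom:
  assumes "u \<in> hom n x"
  shows "Lop n (Rop n u) = (\<lambda>S. Rop n (Lop n u) S + (of_nat n - 2 * of_nat x) * u S)"
proof
  fix S
  show "Lop n (Rop n u) S = Rop n (Lop n u) S + (of_nat n - 2 * of_nat x) * u S"
    using comm_formula[OF hom_qspace[OF assms], of S] homD[OF assms, of S]
    by (cases "card S = x") auto
qed

lemma adjoint_RL: "qinner n (Rop n u) v = qinner n u (Lop n v)"
proof -
  have fin: "finite (Pow {..<n})" by simp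
  have "qinner n (Rop n u) v = (\<Sum>S\<in>Pow {..<n}. \<Sum>j\<in>S. cnj (u (S - {j})) * v S)"
    unfolding qinner_def Rop_def by (auto intro!: sum.cong simp: sum_distrib_right)
  also have "\<dots> = (\<Sum>(S,j)\<in>Sigma (Pow {..<n}) (\<lambda>S. S). cnj (u (S - {j})) * v S)"
    by (rule sum.Sigma) (auto intro: finite_sub)
  also have "\<dots> = (\<Sum>(T,i)\<in>Sigma (Pow {..<n}) (\<lambda>T. {..<n} - T). cnj (u T) * v (insert i T))"
    by (rule sum.reindex_bij_witness[where i = "\<lambda>(T,i). (insert i T, i)" and j = "\<lambda>(S,j). (S - {j}, j)"])
       (auto simp: insert_absorb)
  also have "\<dots> = (\<Sum>T\<in>Pow {..<n}. \<Sum>i\<in>{..<n} - T. cnj (u T) * v (insert i T))"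
    by (rule sum.Sigma[symmetric]) auto
  also have "\<dots> = qinner n u (Lop n v)"
    unfolding qinner_def Lop_def by (auto intro!: sum.cong simp: sum_distrib_left)
  finally show ?thesis .
qed

definition nrm :: "nat \<Rightarrow> qvec \<Rightarrow> real" where
  "nrm n v = (\<Sum>S\<in>Pow {..<n}. (cmod (v S))^2)"

lemma qinner_self: "qinner n v v = complex_of_real (nrm n v)"
  unfolding qinner_def nrm_def of_real_sum
  by (intro sum.cong refl) (simp only: complex_norm_square mult.commute)

lemma nrm_nonneg: "nrm n v \<ge> 0" unfolding nrm_def by (simp add: sum_nonneg)

lemma nrm_zero: assumes "v \<in> qspace n" "nrm n v = 0" shows "v = zv"
proof
  fix S
  show "v S = zv S"
  proof (cases "S \<subseteq> {..<n}")
    case True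
    have "(cmod (v S))^2 = 0"
      using assms(2) True unfolding nrm_def by (subst (asm) sum_nonneg_eq_0_iff) auto
    then show ?thesis by (simp add: zv_def)
  qed (use assms(1) in \<open>simp add: qspaceD zv_def\<close>)
qed

lemma qinner_scale_right: "qinner n u (\<lambda>S. a * v S) = a * qinner n u v"
  unfolding qinner_def by (simp add: sum_distrib_left algebra_simps)

lemma qinner_add_right: "qinner n u (\<lambda>S. v S + w S) = qinner n u v + qinner n u w"
  unfolding qinner_def by (simp add: sum.distrib algebra_simps)

lemma high_ker_zero:
  assumes "u \<in> hom n x" "Lop n u = zv" "n < 2 * x"
  shows "u = zv"
proof -
  have "qinner n (Rop n u) (Rop n u) = qinner n u (Lop n (Rop n u))" by (rule adjoint_RL)
  also have "\<dots> = qinner n u (\<lambda>S. Rop n (Lop n u) S + (of_nat n - 2 * of_nat x) * u S)"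
    using comm_hom[OF assms(1)] by simp
  also have "Rop n (Lop n u) = zv" using assms(2) lin_zero[OF lin_Rop] by simp
  finally have "qinner n (Rop n u) (Rop n u) = (of_nat n - 2 * of_nat x) * qinner n u u"
    by (simp add: zv_def qinner_scale_right)
  then have "complex_of_real (nrm n (Rop n u)) = complex_of_real ((real n - 2 * real x) * nrm n u)"
    by (simp add: qinner_self)
  then have e: "nrm n (Rop n u) = (real n - 2 * real x) * nrm n u" using of_real_eq_iff by blast
  have "(real n - 2 * real x) < 0" using assms(3) by simp
  then have "nrm n u = 0" using e nrm_nonneg[of n "Rop n u"] nrm_nonneg[of n u]
    by (metis mult_neg_pos order_less_le not_le)
  then show ?thesis using nrm_zero hom_qspace[OF assms(1)] by blast
qed

lemma Rpow_hom: "k \<in> hom n x \<Longrightarrow> (Rop n ^^ j) k \<in> hom n (x + j)"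
  by (induction j) (simp_all add: Rop_hom)

lemma LRpow:
  assumes "k \<in> hom n x" "Lop n k = zv"
  shows "Lop n ((Rop n ^^ Suc j) k) = (\<lambda>S. (of_nat (Suc j) * (of_nat n - 2 * of_nat x - of_nat j)) * (Rop n ^^ j) k S)"
proof (induction j)
  case 0
  have "Rop n (Lop n k) = zv" using assms(2) lin_zero[OF lin_Rop] by simp
  then show ?case using comm_hom[OF assms(1)] by (simp add: zv_def)
next
  case (Suc j)
  have h: "(Rop n ^^ Suc j) k \<in> hom n (x + Suc j)" by (rule Rpow_hom[OF assms(1)])
  have "Lop n ((Rop n ^^ Suc (Suc j)) k) = Lop n (Rop n ((Rop n ^^ Suc j) k))" by simp
  also have "\<dots> = (\<lambda>S. Rop n (Lop n ((Rop n ^^ Suc j) k)) S + (of_nat n - 2 * of_nat (x + Suc j)) * (Rop n ^^ Suc j) k S)"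
    by (rule comm_hom[OF h])
  also have "Lop n ((Rop n ^^ Suc j) k) = qscale (of_nat (Suc j) * (of_nat n - 2 * of_nat x - of_nat j)) ((Rop n ^^ j) k)"
    using Suc by (simp add: qscale_def)
  also have "Rop n \<dots> = qscale (of_nat (Suc j) * (of_nat n - 2 * of_nat x - of_nat j)) ((Rop n ^^ Suc j) k)"
    by (simp add: lin_scale[OF lin_Rop])
  finally show ?case by (simp add: qscale_def fun_eq_iff algebra_simps)
qed

lemma decomp_low:
  assumes "2 * w \<le> n" "v \<in> hom n w"
  shows "\<exists>k. (\<forall>x\<le>w. k x \<in> hom n x \<and> Lop n (k x) = zv) \<and> v = (\<lambda>S. \<Sum>x\<le>w. (Rop n ^^ (w - x)) (k x) S)"
  using assms
proof (induction w arbitrary: v)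
  case 0
  then have "Lop n v = zv" using Lop_hom0 by blast
  then show ?case using 0 by (intro exI[of _ "\<lambda>_. v"]) auto
next
  case (Suc w)
  have Lh: "Lop n v \<in> hom n w" using Lop_hom[OF Suc.prems(2)] by simp
  obtain k where k: "\<forall>x\<le>w. k x \<in> hom n x \<and> Lop n (k x) = zv"
    and Lv: "Lop n v = (\<lambda>S. \<Sum>x\<le>w. (Rop n ^^ (w - x)) (k x) S)"
    using Suc.IH[OF _ Lh] Suc.prems(1) by auto
  define c :: "nat \<Rightarrow> complex" where "c x = 1 / (of_nat (Suc (w - x)) * (of_nat n - 2 * of_nat x - of_nat (w - x)))" for x
  define u where "u = (\<lambda>S. \<Sum>x\<le>w. c x * (Rop n ^^ (w - x)) (k x) S)"
  define k' where "k' x = (if x \<le> w then qscale (c x) (k x) else qdiff v (Rop n u))" for x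
  have "(Rop n ^^ (w - x)) (k x) \<in> hom n w" if "x \<in> {..w}" for x
    using Rpow_hom[of "k x" n x "w - x"] k that by simp
  then have uh: "u \<in> hom n w" unfolding u_def
    by (intro subsp_sum[OF subsp_hom]) auto
  have Ru: "Rop n u = (\<lambda>S. \<Sum>x\<le>w. c x * (Rop n ^^ Suc (w - x)) (k x) S)"
    unfolding u_def by (subst lin_sum[OF lin_Rop]) simp_all
  have "Lop n (Rop n u) = (\<lambda>S. \<Sum>x\<le>w. c x * Lop n ((Rop n ^^ Suc (w - x)) (k x)) S)"
    unfolding Ru by (subst lin_sum[OF lin_Lop]) simp_all
  also have "\<dots> = (\<lambda>S. \<Sum>x\<le>w. (Rop n ^^ (w - x)) (k x) S)"
  proof (rule ext, rule sum.cong[OF refl])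
    fix S x assume x: "x \<in> {..w}"
    have nz: "(of_nat (Suc (w - x)) * (of_nat n - 2 * of_nat x - of_nat (w - x)) :: complex) \<noteq> 0"
    proof -
      have "real n - 2 * real x - real (w - x) > 0" using x Suc.prems(1) by (simp add: of_nat_diff)
      then have "(of_nat n - 2 * of_nat x - of_nat (w - x) :: complex) \<noteq> 0"
        by (metis (mono_tags) of_real_of_nat_eq of_real_diff of_real_mult of_real_numeral less_irrefl of_real_eq_0_iff)
      moreover have "(of_nat (Suc (w - x)) :: complex) \<noteq> 0" by (rule of_nat_neq_0)
      ultimately show ?thesis by (metis mult_eq_0_iff)
    qed
    show "c x * Lop n ((Rop n ^^ Suc (w - x)) (k x)) S = (Rop n ^^ (w - x)) (k x) S"
      using LRpow[of "k x" n x "w - x"] k x nz unfolding c_def by simp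
  qed
  finally have LRu: "Lop n (Rop n u) = Lop n v" using Lv by simp
  show ?case
  proof (rule exI[of _ k'], rule conjI, intro allI impI)
    fix x assume x: "x \<le> Suc w"
    show "k' x \<in> hom n x \<and> Lop n (k' x) = zv"
    proof (cases "x \<le> w")
      case True
      then show ?thesis using k unfolding k'_def
        by (simp add: subsp_scale[OF subsp_hom] lin_scale[OF lin_Lop]) (simp add: qscale_def zv_def)
    next
      case False
      then have xe: "x = Suc w" using x by simp
      have "qdiff v (Rop n u) \<in> hom n (Suc w)"
        by (rule subsp_diff[OF subsp_hom Suc.prems(2) Rop_hom[OF uh]])
      moreover have "Lop n (qdiff v (Rop n u)) = zv"
        using LRu by (simp add: lin_diff[OF lin_Lop]) (simp add: qdiff_def zv_def)
      ultimately show ?thesis unfolding k'_def xe by simp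
    qed
  next
    have "(\<lambda>S. \<Sum>x\<le>Suc w. (Rop n ^^ (Suc w - x)) (k' x) S)
        = (\<lambda>S. (\<Sum>x\<le>w. c x * (Rop n ^^ Suc (w - x)) (k x) S) + qdiff v (Rop n u) S)"
    proof (rule ext)
      fix S
      have "(\<Sum>x\<le>w. (Rop n ^^ (Suc w - x)) (k' x) S) = (\<Sum>x\<le>w. c x * (Rop n ^^ Suc (w - x)) (k x) S)"
      proof (rule sum.cong[OF refl])
        fix x assume "x \<in> {..w}"
        then have "Suc w - x = Suc (w - x)" "k' x = qscale (c x) (k x)" unfolding k'_def by auto
        then show "(Rop n ^^ (Suc w - x)) (k' x) S = c x * (Rop n ^^ Suc (w - x)) (k x) S"
          by (simp add: lin_scale[OF lin_pow[OF lin_Rop]] del: funpow.simps) (simp add: qscale_def)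
      qed
      then show "(\<Sum>x\<le>Suc w. (Rop n ^^ (Suc w - x)) (k' x) S) = (\<Sum>x\<le>w. c x * (Rop n ^^ Suc (w - x)) (k x) S) + qdiff v (Rop n u) S"
        by (simp add: k'_def)
    qed
    also have "\<dots> = v" using Ru by (simp add: qdiff_def fun_eq_iff)
    finally show "v = (\<lambda>S. \<Sum>x\<le>Suc w. (Rop n ^^ (Suc w - x)) (k' x) S)" by simp
  qed
qed

definition cols :: "(nat \<times> nat) list \<Rightarrow> nat set \<Rightarrow> bool" where
  "cols ps T \<longleftrightarrow> (\<forall>(a,b)\<in>set ps. (a \<in> T \<longleftrightarrow> b \<notin> T))"

lemma poly_eq: "polytabloid ps T = (if T \<subseteq> pair_set ps \<and> cols ps T then (-1) ^ card (set (map fst ps) \<inter> T) else 0)"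
  by (simp add: polytabloid_def cols_def)

lemma pair_set_cons: "pair_set ((a,b) # ps) = insert a (insert b (pair_set ps))"
  by (auto simp: pair_set_def)
lemma pair_set_app: "pair_set (ps @ [(a,b)]) = insert a (insert b (pair_set ps))"
  by (auto simp: pair_set_def)
lemma pair_set_mem: "(a,b) \<in> set ps \<Longrightarrow> a \<in> pair_set ps \<and> b \<in> pair_set ps"
  by (force simp: pair_set_def)
lemma pair_set_finite: "finite (pair_set ps)" by (simp add: pair_set_def)

lemma distinct_cols:
  assumes "distinct (map fst ps @ map snd ps)" "(a,b) \<in> set ps"
  shows "a \<noteq> b" "a \<notin> snd ` set ps" "b \<notin> fst ` set ps"
    "\<And>a' b'. (a',b') \<in> set ps \<Longrightarrow> (a',b') \<noteq> (a,b) \<Longrightarrow> a' \<noteq> a \<and> a' \<noteq> b \<and> b' \<noteq> a \<and> b' \<noteq> b"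
proof -
  have d: "distinct (map fst ps)" "distinct (map snd ps)" "fst ` set ps \<inter> snd ` set ps = {}"
    using assms(1) by auto
  have i1: "inj_on fst (set ps)" "inj_on snd (set ps)" using d(1,2) distinct_map by auto
  show "a \<notin> snd ` set ps" using d(3) assms(2) by force
  show "b \<notin> fst ` set ps" using d(3) assms(2) by force
  then show "a \<noteq> b" using assms(2) by force
  fix a' b' assume p: "(a',b') \<in> set ps" "(a',b') \<noteq> (a,b)"
  have "a' \<noteq> a" using i1(1) p assms(2) by (metis fst_conv inj_on_eq_iff)
  moreover have "b' \<noteq> b" using i1(2) p assms(2) by (metis snd_conv inj_on_eq_iff)
  moreover have "a' \<noteq> b" using d(3) p(1) assms(2) by force
  moreover have "b' \<noteq> a" using d(3) p(1) assms(2) by force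
  ultimately show "a' \<noteq> a \<and> a' \<noteq> b \<and> b' \<noteq> a \<and> b' \<noteq> b" by blast
qed

lemma card_cols:
  assumes "distinct (map fst ps @ map snd ps)" "T \<subseteq> pair_set ps" "cols ps T"
  shows "card T = length ps"
  using assms
proof (induction ps arbitrary: T)
  case Nil then show ?case by (simp add: pair_set_def)
next
  case (Cons p ps)
  obtain a b where p: "p = (a,b)" by fastforce
  have dd: "distinct (map fst ps @ map snd ps)" using Cons.prems(1) by auto
  have ab: "a \<notin> pair_set ps" "b \<notin> pair_set ps" "a \<noteq> b"
    using Cons.prems(1) p by (auto simp: pair_set_def)
  define T' where "T' = T - {a, b}"
  have T'sub: "T' \<subseteq> pair_set ps" using Cons.prems(2) p unfolding T'_def by (auto simp: pair_set_cons)
  have "cols ps T'"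
    unfolding cols_def
  proof (intro ballI, clarify)
    fix a' b' assume ab': "(a',b') \<in> set ps"
    then have "a' \<noteq> a \<and> a' \<noteq> b \<and> b' \<noteq> a \<and> b' \<noteq> b" using ab pair_set_mem by blast
    moreover have "a' \<in> T \<longleftrightarrow> b' \<notin> T" using Cons.prems(3) ab' unfolding cols_def by auto
    ultimately show "(a' \<in> T') = (b' \<notin> T')" unfolding T'_def by auto
  qed
  then have cT': "card T' = length ps" using Cons.IH[OF dd T'sub] by simp
  have ft: "finite T'" using T'sub pair_set_finite finite_subset by blast
  have ex: "a \<in> T \<longleftrightarrow> b \<notin> T" using Cons.prems(3) p unfolding cols_def by auto
  have "T = insert a T' \<or> T = insert b T'" using ex unfolding T'_def by auto
  moreover have "a \<notin> T'" "b \<notin> T'" unfolding T'_def by auto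
  ultimately have "card T = Suc (card T')" using ft by (metis card_insert_disjoint)
  then show ?case using cT' by simp
qed

lemma poly_hom:
  assumes "ps \<in> tableau_cols n x"
  shows "polytabloid ps \<in> hom n x"
  unfolding hom_def qspace_def
proof (intro CollectI conjI allI impI)
  have t: "length ps = x" "distinct (map fst ps @ map snd ps)" "pair_set ps \<subseteq> {..<n}"
    using assms by (auto simp: tableau_cols_def)
  fix S assume "\<not> S \<subseteq> {..<n}"
  then show "polytabloid ps S = 0" using t(3) unfolding poly_eq by auto
next
  have t: "length ps = x" "distinct (map fst ps @ map snd ps)" "pair_set ps \<subseteq> {..<n}"
    using assms by (auto simp: tableau_cols_def)
  fix S :: "nat set" assume "card S \<noteq> x"
  then show "polytabloid ps S = 0" using card_cols[OF t(2)] t(1) unfolding poly_eq by auto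
qed

lemma poly_swap:
  assumes d: "distinct (map fst ps @ map snd ps)" and ab: "(a,b) \<in> set ps" and S: "a \<notin> S" "b \<notin> S"
  shows "polytabloid ps (insert a S) = - polytabloid ps (insert b S)"
proof -
  note dc = distinct_cols[OF d ab]
  have ps: "a \<in> pair_set ps" "b \<in> pair_set ps" using pair_set_mem[OF ab] by auto
  have sub: "insert a S \<subseteq> pair_set ps \<longleftrightarrow> insert b S \<subseteq> pair_set ps" using ps by auto
  have cl: "cols ps (insert a S) \<longleftrightarrow> cols ps (insert b S)"
    unfolding cols_def
  proof (intro iffI ballI; clarify)
    fix a' b' assume h: "\<forall>(a', b')\<in>set ps. (a' \<in> insert a S) = (b' \<notin> insert a S)" and p: "(a',b') \<in> set ps"
    show "(a' \<in> insert b S) = (b' \<notin> insert b S)"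
    proof (cases "(a',b') = (a,b)")
      case True then show ?thesis using dc(1) S by auto
    next
      case False
      then have "a' \<noteq> a \<and> a' \<noteq> b \<and> b' \<noteq> a \<and> b' \<noteq> b" using dc(4) p by blast
      then show ?thesis using h p by auto
    qed
  next
    fix a' b' assume h: "\<forall>(a', b')\<in>set ps. (a' \<in> insert b S) = (b' \<notin> insert b S)" and p: "(a',b') \<in> set ps"
    show "(a' \<in> insert a S) = (b' \<notin> insert a S)"
    proof (cases "(a',b') = (a,b)")
      case True then show ?thesis using dc(1) S by auto
    next
      case False
      then have "a' \<noteq> a \<and> a' \<noteq> b \<and> b' \<noteq> a \<and> b' \<noteq> b" using dc(4) p by blast
      then show ?thesis using h p by auto
    qed
  qed
  have fa: "a \<in> set (map fst ps)" using ab by force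
  have fb: "b \<notin> set (map fst ps)" using dc(3) by simp
  have c1: "set (map fst ps) \<inter> insert a S = insert a (set (map fst ps) \<inter> S)" using fa by auto
  have c2: "set (map fst ps) \<inter> insert b S = set (map fst ps) \<inter> S" using fb by auto
  have "card (set (map fst ps) \<inter> insert a S) = Suc (card (set (map fst ps) \<inter> S))"
    unfolding c1 using S by (subst card_insert_disjoint) auto
  then show ?thesis unfolding poly_eq using sub cl c2 by simp
qed

lemma poly_both_zero:
  assumes "(a,b) \<in> set ps" "a \<in> T" "b \<in> T"
  shows "polytabloid ps T = 0"
  using assms unfolding poly_eq cols_def by auto

lemma sum_invol_zero:
  fixes f :: "'a \<Rightarrow> complex"
  assumes "finite A" "\<And>i. i \<in> A \<Longrightarrow> h i \<in> A \<and> h (h i) = i \<and> f (h i) = - f i"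
  shows "sum f A = 0"
proof -
  have "sum f A = sum (\<lambda>i. f (h i)) A"
    by (rule sum.reindex_bij_witness[where i = h and j = h]) (use assms(2) in auto)
  also have "\<dots> = - sum f A" using assms(2) by (simp add: sum_negf)
  finally show ?thesis by simp
qed

definition partner :: "(nat \<times> nat) list \<Rightarrow> nat \<Rightarrow> nat" where
  "partner ps i = (case map_of ps i of Some b \<Rightarrow> b | None \<Rightarrow>
      (case map_of (map prod.swap ps) i of Some a \<Rightarrow> a | None \<Rightarrow> i))"

lemma partner_props:
  assumes d: "distinct (map fst ps @ map snd ps)" and ab: "(a,b) \<in> set ps"
  shows "partner ps a = b" "partner ps b = a"
proof -
  have d1: "distinct (map fst ps)" using d by simp
  have d2: "distinct (map fst (map prod.swap ps))" using d by (simp add: comp_def)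
  show "partner ps a = b" unfolding partner_def using map_of_is_SomeI[OF d1 ab] by simp
  have "b \<notin> fst ` set ps" using distinct_cols(3)[OF d ab] .
  then have "map_of ps b = None" by (simp add: map_of_eq_None_iff)
  moreover have "(b,a) \<in> set (map prod.swap ps)" using ab by force
  ultimately show "partner ps b = a" unfolding partner_def using map_of_is_SomeI[OF d2] by simp
qed

lemma partner_out: "i \<notin> pair_set ps \<Longrightarrow> partner ps i = i"
proof -
  assume "i \<notin> pair_set ps"
  then have "i \<notin> fst ` set ps" "i \<notin> fst ` set (map prod.swap ps)" by (force simp: pair_set_def)+
  then have "map_of ps i = None" "map_of (map prod.swap ps) i = None"
    by (simp_all only: map_of_eq_None_iff not_False_eq_True)
  then show ?thesis unfolding partner_def by simp
qed

lemma in_pair_set: "i \<in> pair_set ps \<Longrightarrow> \<exists>a b. (a,b) \<in> set ps \<and> (i = a \<or> i = b)"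
  by (force simp: pair_set_def)

lemma poly_ker:
  assumes "ps \<in> tableau_cols n x"
  shows "Lop n (polytabloid ps) = zv"
proof
  fix S
  have t: "distinct (map fst ps @ map snd ps)" "pair_set ps \<subseteq> {..<n}"
    using assms by (auto simp: tableau_cols_def)
  define h where "h i = (if partner ps i \<notin> S then partner ps i else i)" for i
  have "(\<Sum>i\<in>{..<n} - S. polytabloid ps (insert i S)) = 0"
  proof (rule sum_invol_zero[where h = h])
    fix i assume i: "i \<in> {..<n} - S"
    show "h i \<in> {..<n} - S \<and> h (h i) = i \<and> polytabloid ps (insert (h i) S) = - polytabloid ps (insert i S)"
    proof (cases "i \<in> pair_set ps")
      case False
      then have "h i = i" unfolding h_def by (simp add: partner_out)
      moreover have "polytabloid ps (insert i S) = 0" using False unfolding poly_eq by auto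
      ultimately show ?thesis using i by simp
    next
      case True
      then obtain a b where ab: "(a,b) \<in> set ps" "i = a \<or> i = b" using in_pair_set by blast
      note pp = partner_props[OF t(1) ab(1)]
      have abn: "a \<in> {..<n}" "b \<in> {..<n}" using pair_set_mem[OF ab(1)] t(2) by auto
      show ?thesis
      proof (cases "partner ps i \<in> S")
        case True
        then have "h i = i" unfolding h_def by simp
        moreover have "polytabloid ps (insert i S) = 0"
          using ab True pp by (intro poly_both_zero[OF ab(1)]) auto
        ultimately show ?thesis using i by simp
      next
        case False
        show ?thesis
        proof (cases "i = a")
          case True
          then have hi: "h i = b" using False pp unfolding h_def by simp
          have "h b = a" using pp i True unfolding h_def by simp
          then show ?thesis using hi True poly_swap[OF t(1) ab(1)] i False pp abn by auto
        next
          case False': False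
          then have ib: "i = b" using ab(2) by simp
          then have hi: "h i = a" using False pp unfolding h_def by simp
          have "h a = b" using pp i ib unfolding h_def by simp
          then show ?thesis using hi ib poly_swap[OF t(1) ab(1)] i False pp abn by auto
        qed
      qed
    qed
  qed simp
  then show "Lop n (polytabloid ps) S = zv S" by (simp add: Lop_def zv_def)
qed

lemma perm_act_bij: "bij \<sigma> \<Longrightarrow> perm_act \<sigma> v T = v (\<sigma> -` T)"
  by (simp add: perm_act_def bij_vimage_eq_inv_image)

lemma bij_vimage_sub: assumes "bij \<sigma>" shows "\<sigma> -` T \<subseteq> P \<longleftrightarrow> T \<subseteq> \<sigma> ` P"
proof
  have e1: "\<sigma> ` (\<sigma> -` T) = T" using assms by (simp add: bij_is_surj surj_image_vimage_eq)
  have e2: "\<sigma> -` (\<sigma> ` P) = P" using assms by (simp add: bij_is_inj inj_vimage_image_eq)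
  show "\<sigma> -` T \<subseteq> P \<Longrightarrow> T \<subseteq> \<sigma> ` P" using e1 by (metis image_mono)
  show "T \<subseteq> \<sigma> ` P \<Longrightarrow> \<sigma> -` T \<subseteq> P" using e2 by (metis vimage_mono)
qed

lemma tableau_perm:
  assumes s: "\<sigma> permutes {..<n}" and ps: "ps \<in> tableau_cols n x"
  shows "map (map_prod \<sigma> \<sigma>) ps \<in> tableau_cols n x"
    and "perm_act \<sigma> (polytabloid ps) = polytabloid (map (map_prod \<sigma> \<sigma>) ps)"
proof -
  have b: "bij \<sigma>" using s permutes_bij by blast
  have inj: "inj \<sigma>" using b bij_is_inj by blast
  have t: "length ps = x" "distinct (map fst ps @ map snd ps)" "pair_set ps \<subseteq> {..<n}"
    using ps by (auto simp: tableau_cols_def)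
  define ps' where "ps' = map (map_prod \<sigma> \<sigma>) ps"
  have ps1: "map fst ps' = map \<sigma> (map fst ps)" "map snd ps' = map \<sigma> (map snd ps)"
    unfolding ps'_def by (induction ps) auto
  have pset: "pair_set ps' = \<sigma> ` pair_set ps" unfolding pair_set_def ps1 by auto
  show "ps' \<in> tableau_cols n x" unfolding tableau_cols_def
  proof (intro CollectI conjI)
    show "length ps' = x" using t(1) unfolding ps'_def by simp
    have "map fst ps' @ map snd ps' = map \<sigma> (map fst ps @ map snd ps)" unfolding ps1 by simp
    moreover have "distinct (map \<sigma> (map fst ps @ map snd ps))"
      using distinct_map[of \<sigma> "map fst ps @ map snd ps"] t(2) inj_on_subset[OF inj subset_UNIV] by blast
    ultimately show "distinct (map fst ps' @ map snd ps')" by simp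
    show "pair_set ps' \<subseteq> {..<n}" unfolding pset using t(3) permutes_image[OF s] by blast
  qed
  show "perm_act \<sigma> (polytabloid ps) = polytabloid ps'"
  proof
    fix T
    have "perm_act \<sigma> (polytabloid ps) T = polytabloid ps (\<sigma> -` T)" by (rule perm_act_bij[OF b])
    moreover have "\<sigma> -` T \<subseteq> pair_set ps \<longleftrightarrow> T \<subseteq> pair_set ps'"
      unfolding pset by (rule bij_vimage_sub[OF b])
    moreover have "cols ps (\<sigma> -` T) \<longleftrightarrow> cols ps' T"
      unfolding cols_def ps'_def by (simp add: split_def)
    moreover have "card (set (map fst ps) \<inter> \<sigma> -` T) = card (set (map fst ps') \<inter> T)"
    proof -
      have "\<sigma> ` (set (map fst ps) \<inter> \<sigma> -` T) = set (map fst ps') \<inter> T" unfolding ps1 by auto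
      moreover have "card (\<sigma> ` (set (map fst ps) \<inter> \<sigma> -` T)) = card (set (map fst ps) \<inter> \<sigma> -` T)"
        by (rule card_image[OF inj_on_subset[OF inj]]) simp
      ultimately show ?thesis by simp
    qed
    ultimately show "perm_act \<sigma> (polytabloid ps) T = polytabloid ps' T" unfolding poly_eq by simp
  qed
qed

lemma qspan_map:
  assumes "lin f" "\<And>a. a \<in> A \<Longrightarrow> f a \<in> qspan B" "u \<in> qspan A"
  shows "f u \<in> qspan B"
proof -
  have "subsp {v. f v \<in> qspan B}"
    unfolding subsp_def using qspan_subsp[of B] lin_zero[OF assms(1)]
    by (simp add: lin_add[OF assms(1)] lin_scale[OF assms(1)] subsp_add subsp_scale subsp_zero)
  then have "qspan A \<subseteq> {v. f v \<in> qspan B}" by (rule qspan_least) (use assms(2) in auto)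
  then show ?thesis using assms(3) by auto
qed

lemma qspan_mono: "A \<subseteq> B \<Longrightarrow> qspan A \<subseteq> qspan B"
  by (rule qspan_least[OF qspan_subsp]) (auto intro: qspan_base)

lemma specht_subsp: "subsp (specht n x)" unfolding specht_def by (rule qspan_subsp)

lemma specht_sub: "specht n x \<subseteq> hom n x \<inter> {v. Lop n v = zv}"
  unfolding specht_def
  by (rule qspan_least[OF subsp_Int[OF subsp_hom subsp_ker[OF lin_Lop]]]) (auto intro: poly_hom poly_ker)

lemma specht_hom: "u \<in> specht n x \<Longrightarrow> u \<in> hom n x" using specht_sub by blast
lemma specht_ker: "u \<in> specht n x \<Longrightarrow> Lop n u = zv" using specht_sub by blast
lemma specht_qspace: "u \<in> specht n x \<Longrightarrow> u \<in> qspace n" using specht_hom hom_qspace by blast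

lemma specht_perm:
  assumes "\<sigma> permutes {..<n}" "u \<in> specht n x"
  shows "perm_act \<sigma> u \<in> specht n x"
  using assms(2) unfolding specht_def
  by (rule qspan_map[OF lin_perm_act, rotated]) (use tableau_perm[OF assms(1)] in \<open>auto intro: qspan_base\<close>)

lemma specht_mono: "specht n x \<subseteq> specht (Suc n) x"
  unfolding specht_def by (rule qspan_mono, rule image_mono) (auto simp: tableau_cols_def)

lemma specht_zero: assumes "v \<in> hom n 0" shows "v \<in> specht n 0"
proof -
  have "[] \<in> tableau_cols n 0" by (simp add: tableau_cols_def pair_set_def)
  then have p: "polytabloid [] \<in> specht n 0" unfolding specht_def by (auto intro: qspan_base)
  have vv: "v = qscale (v {}) (polytabloid [])"
  proof
    fix S
    show "v S = qscale (v {}) (polytabloid []) S"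
    proof (cases "S = {}")
      case True then show ?thesis by (simp add: qscale_def poly_eq pair_set_def cols_def)
    next
      case False
      have "v S = 0"
      proof (cases "S \<subseteq> {..<n}")
        case True
        then have "finite S" by (rule finite_sub)
        then have "card S \<noteq> 0" using False by simp
        then show ?thesis using homD[OF assms] by blast
      qed (use assms homD2 in blast)
      then show ?thesis using False by (simp add: qscale_def poly_eq pair_set_def)
    qed
  qed
  show ?thesis by (subst vv) (rule subsp_scale[OF specht_subsp p])
qed

lemma poly_ext:
  assumes ps: "ps \<in> tableau_cols n x" and a: "a < n" "a \<notin> pair_set ps"
  shows "ps @ [(a, n)] \<in> tableau_cols (Suc n) (Suc x)"
    and "\<And>S. S \<subseteq> {..<n} \<Longrightarrow> polytabloid (ps @ [(a, n)]) (insert n S) = polytabloid ps S"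
proof -
  have t: "length ps = x" "distinct (map fst ps @ map snd ps)" "pair_set ps \<subseteq> {..<n}"
    using ps by (auto simp: tableau_cols_def)
  have nn: "n \<notin> pair_set ps" using t(3) by auto
  have fa: "a \<notin> set (map fst ps)" "a \<notin> set (map snd ps)" "n \<notin> set (map fst ps)" "n \<notin> set (map snd ps)"
    using a(2) nn by (auto simp: pair_set_def)
  show "ps @ [(a, n)] \<in> tableau_cols (Suc n) (Suc x)"
    unfolding tableau_cols_def using t fa a(1) by (auto simp: pair_set_app)
  fix S assume S: "S \<subseteq> {..<n}"
  have nS: "n \<notin> S" using S by auto
  have e1: "insert n S \<subseteq> pair_set (ps @ [(a, n)]) \<and> cols (ps @ [(a, n)]) (insert n S)
      \<longleftrightarrow> S \<subseteq> pair_set ps \<and> cols ps S"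
  proof -
    have "cols (ps @ [(a, n)]) (insert n S) \<longleftrightarrow> a \<notin> S \<and> cols ps S"
    proof -
      have "(\<forall>(a', b')\<in>set ps. (a' \<in> insert n S) = (b' \<notin> insert n S)) \<longleftrightarrow> cols ps S"
        unfolding cols_def using nn by (force dest: pair_set_mem)
      moreover have "a \<noteq> n" using a(1) by simp
      ultimately show ?thesis unfolding cols_def by auto
    qed
    then show ?thesis using nS a(2) by (auto simp: pair_set_app)
  qed
  have e2: "set (map fst (ps @ [(a, n)])) \<inter> insert n S = set (map fst ps) \<inter> S" if "a \<notin> S"
    using that fa nS a(1) by auto
  show "polytabloid (ps @ [(a, n)]) (insert n S) = polytabloid ps S"
  proof (cases "S \<subseteq> pair_set ps \<and> cols ps S")
    case True
    then have "a \<notin> S" using a(2) by auto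
    have c1: "insert n S \<subseteq> pair_set (ps @ [(a, n)]) \<and> cols (ps @ [(a, n)]) (insert n S)"
      using e1 True by blast
    show ?thesis unfolding poly_eq by (simp only: if_P[OF c1] if_P[OF True] e2[OF \<open>a \<notin> S\<close>])
  next
    case False
    have c1: "\<not> (insert n S \<subseteq> pair_set (ps @ [(a, n)]) \<and> cols (ps @ [(a, n)]) (insert n S))"
      using e1 False by blast
    show ?thesis unfolding poly_eq by (simp only: if_not_P[OF c1] if_not_P[OF False])
  qed
qed

lemma card_pair_set: "card (pair_set ps) \<le> 2 * length ps"
proof -
  have "card (pair_set ps) \<le> length (map fst ps @ map snd ps)" unfolding pair_set_def
    by (metis card_length set_append)
  then show ?thesis by simp
qed

lemma ker_specht:
  "v \<in> hom n x \<Longrightarrow> Lop n v = zv \<Longrightarrow> 2 * x \<le> n \<Longrightarrow> v \<in> specht n x"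
proof (induction n arbitrary: x v)
  case 0
  then have "x = 0" by simp
  then show ?case using specht_zero 0 by simp
next
  case (Suc n')
  show ?case
  proof (cases "x = 0")
    case True then show ?thesis using specht_zero Suc.prems by simp
  next
    case False
    then obtain x' where x': "x = Suc x'" by (metis not0_implies_Suc)
    have vq: "v \<in> qspace (Suc n')" using Suc.prems(1) hom_qspace by blast
    define v1 where "v1 = (\<lambda>S. if S \<subseteq> {..<n'} then v (insert n' S) else 0)"
    have v1h: "v1 \<in> hom n' x'"
      unfolding hom_def qspace_def
    proof (intro CollectI conjI allI impI)
      fix S assume "\<not> S \<subseteq> {..<n'}" then show "v1 S = 0" by (simp add: v1_def)
    next
      fix S :: "nat set" assume c: "card S \<noteq> x'"
      show "v1 S = 0"
      proof (cases "S \<subseteq> {..<n'}")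
        case True
        then have "finite S" "n' \<notin> S" using finite_sub by auto
        then have "card (insert n' S) \<noteq> x" using c x' by simp
        then show ?thesis using homD[OF Suc.prems(1)] by (simp add: v1_def)
      qed (simp add: v1_def)
    qed
    have v1k: "Lop n' v1 = zv"
    proof
      fix S
      show "Lop n' v1 S = zv S"
      proof (cases "S \<subseteq> {..<n'}")
        case True
        have e: "{..<Suc n'} - insert n' S = {..<n'} - S" using True by auto
        have "Lop n' v1 S = (\<Sum>i\<in>{..<n'} - S. v (insert i (insert n' S)))"
          using True by (simp add: Lop_def v1_def insert_commute)
        also have "\<dots> = Lop (Suc n') v (insert n' S)"
        proof -
          have "insert n' S \<subseteq> {..<Suc n'}" using True by auto
          then show ?thesis by (simp add: Lop_def e)
        qed
        also have "\<dots> = 0" using Suc.prems(2) by (simp add: zv_def)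
        finally show ?thesis by (simp add: zv_def)
      qed (simp add: Lop_def zv_def)
    qed
    have "v1 \<in> specht n' x'" using Suc.IH[OF v1h v1k] Suc.prems(3) x' by simp
    then obtain r :: nat and c w where v1e: "v1 = (\<lambda>S. \<Sum>i<r. c i * w i S)"
      and wi: "\<forall>i<r. w i \<in> polytabloid ` tableau_cols n' x'"
      unfolding specht_def qspan_def by blast
    have "\<forall>i<r. \<exists>p a. p \<in> tableau_cols n' x' \<and> w i = polytabloid p \<and> a < n' \<and> a \<notin> pair_set p"
    proof (intro allI impI)
      fix i assume "i < r"
      then obtain p where p: "p \<in> tableau_cols n' x'" "w i = polytabloid p" using wi by blast
      have "card (pair_set p) < n'" using card_pair_set[of p] p(1) Suc.prems(3) x'
        by (simp add: tableau_cols_def)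
      then have "\<not> {..<n'} \<subseteq> pair_set p" by (metis card_lessThan card_mono not_le pair_set_finite)
      then obtain a where "a < n'" "a \<notin> pair_set p" by auto
      then show "\<exists>p a. p \<in> tableau_cols n' x' \<and> w i = polytabloid p \<and> a < n' \<and> a \<notin> pair_set p"
        using p by blast
    qed
    then obtain ps aa where psa: "\<And>i. i < r \<Longrightarrow> ps i \<in> tableau_cols n' x' \<and> w i = polytabloid (ps i) \<and> aa i < n' \<and> aa i \<notin> pair_set (ps i)"
      by metis
    define w' where "w' = (\<lambda>S. \<Sum>i<r. c i * polytabloid (ps i @ [(aa i, n')]) S)"
    have w'sp: "w' \<in> specht (Suc n') x" unfolding w'_def x'
      by (rule subsp_sum[OF specht_subsp]) (use psa poly_ext(1) in \<open>auto simp: specht_def intro!: qspan_base\<close>)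
    define u where "u = qdiff v w'"
    have uh: "u \<in> hom (Suc n') x" unfolding u_def
      by (rule subsp_diff[OF subsp_hom Suc.prems(1) specht_hom[OF w'sp]])
    have uk: "Lop (Suc n') u = zv" unfolding u_def lin_diff[OF lin_Lop]
      using Suc.prems(2) specht_ker[OF w'sp] by (simp add: qdiff_def zv_def)
    have u0: "u (insert n' S) = 0" if S: "S \<subseteq> {..<n'}" for S
    proof -
      have "v (insert n' S) = v1 S" using S by (simp add: v1_def)
      also have "\<dots> = w' (insert n' S)" unfolding v1e w'_def
      proof (intro sum.cong refl)
        fix i assume "i \<in> {..<r}"
        then have h: "ps i \<in> tableau_cols n' x' \<and> w i = polytabloid (ps i) \<and> aa i < n' \<and> aa i \<notin> pair_set (ps i)"
          using psa by auto
        show "c i * w i S = c i * polytabloid (ps i @ [(aa i, n')]) (insert n' S)"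
          using poly_ext(2)[of "ps i" n' x' "aa i" S] h S by simp
      qed
      finally show ?thesis by (simp add: u_def qdiff_def)
    qed
    have uh': "u \<in> hom n' x"
      unfolding hom_def qspace_def
    proof (intro CollectI conjI allI impI)
      fix S assume S: "\<not> S \<subseteq> {..<n'}"
      show "u S = 0"
      proof (cases "S \<subseteq> {..<Suc n'}")
        case True
        have "n' \<in> S"
        proof (rule ccontr)
          assume "n' \<notin> S"
          then have "S \<subseteq> {..<n'}" using True by (auto simp: subset_iff less_Suc_eq)
          then show False using S by simp
        qed
        moreover have "S - {n'} \<subseteq> {..<n'}" using True by (auto simp: subset_iff less_Suc_eq)
        ultimately show ?thesis using u0[of "S - {n'}"] by (simp add: insert_absorb)
      qed (use uh homD2 in blast)
    next
      fix S :: "nat set" assume "card S \<noteq> x" then show "u S = 0" using uh homD by blast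
    qed
    have uk': "Lop n' u = zv"
    proof
      fix S
      show "Lop n' u S = zv S"
      proof (cases "S \<subseteq> {..<n'}")
        case True
        have e: "{..<Suc n'} - S = insert n' ({..<n'} - S)" using True by auto
        have "0 = Lop (Suc n') u S" using uk by (simp add: zv_def)
        also have "\<dots> = u (insert n' S) + Lop n' u S"
        proof -
          have "S \<subseteq> {..<Suc n'}" using True by auto
          then show ?thesis using True by (simp add: Lop_def e)
        qed
        finally show ?thesis using u0[OF True] by (simp add: zv_def)
      qed (simp add: Lop_def zv_def)
    qed
    have usp: "u \<in> specht (Suc n') x"
    proof (cases "2 * x \<le> n'")
      case True
      then show ?thesis using Suc.IH[OF uh' uk'] specht_mono by blast
    next
      case False
      then have "u = zv" using high_ker_zero[OF uh' uk'] by simp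
      then show ?thesis using subsp_zero[OF specht_subsp] by simp
    qed
    have "v = qadd u w'" unfolding u_def by (simp add: qadd_def qdiff_def)
    then show ?thesis using subsp_add[OF specht_subsp usp w'sp] by simp
  qed
qed

definition flipv :: "nat \<Rightarrow> qvec \<Rightarrow> qvec" where
  "flipv n v = (\<lambda>S. if S \<subseteq> {..<n} then v ({..<n} - S) else 0)"

lemma lin_flip: "lin (flipv n)"
  by (simp add: lin_def flipv_def qadd_def qscale_def fun_eq_iff)

lemma flip_qspace: "flipv n v \<in> qspace n" by (simp add: flipv_def qspace_def)

lemma flip_hom: assumes "v \<in> hom n w" "w \<le> n" shows "flipv n v \<in> hom n (n - w)"
  unfolding hom_def
proof (intro CollectI conjI allI impI flip_qspace)
  fix S :: "nat set" assume c: "card S \<noteq> n - w"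
  show "flipv n v S = 0"
  proof (cases "S \<subseteq> {..<n}")
    case True
    then have "card ({..<n} - S) = n - card S" "card S \<le> n"
      by (simp_all add: card_Diff_subset finite_sub) (metis card_lessThan card_mono finite_lessThan)
    then have "card ({..<n} - S) \<noteq> w" using c assms(2) by linarith
    then show ?thesis using True homD[OF assms(1)] by (simp add: flipv_def)
  qed (simp add: flipv_def)
qed

lemma flip_flip: assumes "v \<in> qspace n" shows "flipv n (flipv n v) = v"
proof
  fix S
  show "flipv n (flipv n v) S = v S"
  proof (cases "S \<subseteq> {..<n}")
    case True
    then have "{..<n} - ({..<n} - S) = S" by auto
    then show ?thesis using True by (simp add: flipv_def)
  qed (use assms qspaceD in \<open>simp add: flipv_def\<close>)
qed

lemma permutes_vimage: assumes "\<sigma> permutes A" shows "\<sigma> -` A = A"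
proof -
  have "bij \<sigma>" using assms permutes_bij by blast
  then have "\<sigma> -` (\<sigma> ` A) = A" by (simp add: bij_is_inj inj_vimage_image_eq)
  then show ?thesis using permutes_image[OF assms] by simp
qed

lemma perm_sub: assumes "\<sigma> permutes {..<n}" shows "\<sigma> -` T \<subseteq> {..<n} \<longleftrightarrow> T \<subseteq> {..<n}"
  using bij_vimage_sub[OF permutes_bij[OF assms]] permutes_image[OF assms] by simp

lemma flip_perm: assumes s: "\<sigma> permutes {..<n}" shows "flipv n (perm_act \<sigma> v) = perm_act \<sigma> (flipv n v)"
proof
  fix T
  have b: "bij \<sigma>" using s permutes_bij by blast
  have "\<sigma> -` ({..<n} - T) = {..<n} - \<sigma> -` T" using permutes_vimage[OF s] by auto
  then show "flipv n (perm_act \<sigma> v) T = perm_act \<sigma> (flipv n v) T"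
    unfolding flipv_def perm_act_bij[OF b] using perm_sub[OF s] by simp
qed

lemma R_perm: assumes s: "\<sigma> permutes {..<n}" shows "Rop n (perm_act \<sigma> v) = perm_act \<sigma> (Rop n v)"
proof
  fix T
  have b: "bij \<sigma>" using s permutes_bij by blast
  have inj: "inj \<sigma>" using b bij_is_inj by blast
  have "(\<Sum>j\<in>T. v (\<sigma> -` (T - {j}))) = (\<Sum>j\<in>\<sigma> -` T. v (\<sigma> -` T - {j}))"
  proof (rule sum.reindex_bij_witness[where i = \<sigma> and j = "inv \<sigma>"])
    fix a assume "a \<in> T" then show "\<sigma> (inv \<sigma> a) = a" using b by (meson bij_is_surj surj_f_inv_f)
  next
    fix a assume "a \<in> T" then show "inv \<sigma> a \<in> \<sigma> -` T" using b by (simp add: bij_is_surj surj_f_inv_f)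
  next
    fix c assume "c \<in> \<sigma> -` T" then show "inv \<sigma> (\<sigma> c) = c" using inj by simp
  next
    fix c assume "c \<in> \<sigma> -` T" then show "\<sigma> c \<in> T" by simp
  next
    fix a assume "a \<in> T"
    have "\<sigma> (inv \<sigma> a) = a" using b by (meson bij_is_surj surj_f_inv_f)
    then have "\<sigma> -` (T - {a}) = \<sigma> -` T - {inv \<sigma> a}" using inj by (auto simp: inj_eq)
    then show "v (\<sigma> -` T - {inv \<sigma> a}) = v (\<sigma> -` (T - {a}))" by simp
  qed
  then show "Rop n (perm_act \<sigma> v) T = perm_act \<sigma> (Rop n v) T"
    unfolding Rop_def perm_act_bij[OF b] using perm_sub[OF s] by simp
qed

lemma Rpow_perm: "\<sigma> permutes {..<n} \<Longrightarrow> (Rop n ^^ j) (perm_act \<sigma> v) = perm_act \<sigma> ((Rop n ^^ j) v)"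
  by (induction j) (simp_all add: R_perm)

lemma Rpow_qspace: "v \<in> qspace n \<Longrightarrow> (Rop n ^^ j) v \<in> qspace n"
  by (induction j) (simp_all add: Rop_qspace)

lemma equiv_in:
  assumes "lin g" "\<And>v. v \<in> qspace n \<Longrightarrow> g v \<in> qspace n"
    "\<And>\<sigma> v. \<sigma> permutes {..<n} \<Longrightarrow> g (perm_act \<sigma> v) = perm_act \<sigma> (g v)"
  shows "g \<in> equivariant_maps n x"
  unfolding equivariant_maps_def using assms specht_qspace
  by (auto simp: lin_add lin_scale)

lemma iso_mem: "g \<in> equivariant_maps n x \<Longrightarrow> u \<in> specht n x \<Longrightarrow> g u \<in> isotypic n x"
  unfolding isotypic_def by (rule qspan_base) blast

lemma Rpow_iso: "u \<in> specht n x \<Longrightarrow> (Rop n ^^ j) u \<in> isotypic n x"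
  by (rule iso_mem[OF equiv_in]) (simp_all add: lin_pow lin_Rop Rpow_qspace Rpow_perm)

lemma flip_Rpow_iso: "u \<in> specht n x \<Longrightarrow> flipv n ((Rop n ^^ j) u) \<in> isotypic n x"
proof -
  assume u: "u \<in> specht n x"
  have "(flipv n \<circ> (Rop n ^^ j)) \<in> equivariant_maps n x"
    by (rule equiv_in) (simp_all add: lin_comp lin_flip lin_pow lin_Rop flip_qspace Rpow_perm flip_perm)
  from iso_mem[OF this u] show ?thesis by simp
qed

lemma iso_subsp: "subsp (isotypic n x)" unfolding isotypic_def by (rule qspan_subsp)

lemma decomp:
  assumes "v \<in> hom n w" "w \<le> n"
  shows "\<exists>vv. (\<forall>x. vv x \<in> isotypic n x) \<and> v = (\<lambda>S. \<Sum>x\<le>n div 2. vv x S)"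
proof (cases "2 * w \<le> n")
  case True
  obtain k where k: "\<forall>x\<le>w. k x \<in> hom n x \<and> Lop n (k x) = zv"
    and ve: "v = (\<lambda>S. \<Sum>x\<le>w. (Rop n ^^ (w - x)) (k x) S)"
    using decomp_low[OF True assms(1)] by blast
  define vv where "vv x = (if x \<le> w then (Rop n ^^ (w - x)) (k x) else zv)" for x
  have "vv x \<in> isotypic n x" for x
  proof (cases "x \<le> w")
    case True
    then have "k x \<in> specht n x" using k ker_specht \<open>2 * w \<le> n\<close> by simp
    then show ?thesis using True Rpow_iso unfolding vv_def by simp
  qed (simp add: vv_def subsp_zero[OF iso_subsp])
  moreover have "v = (\<lambda>S. \<Sum>x\<le>n div 2. vv x S)"
  proof
    fix S
    have "(\<Sum>x\<le>n div 2. vv x S) = (\<Sum>x\<le>w. vv x S)"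
      by (rule sum.mono_neutral_right) (use True in \<open>auto simp: vv_def zv_def\<close>)
    then show "v S = (\<Sum>x\<le>n div 2. vv x S)" unfolding ve vv_def by simp
  qed
  ultimately show ?thesis by blast
next
  case False
  have fh: "flipv n v \<in> hom n (n - w)" by (rule flip_hom[OF assms])
  have le: "2 * (n - w) \<le> n" using False by simp
  obtain k where k: "\<forall>x\<le>n - w. k x \<in> hom n x \<and> Lop n (k x) = zv"
    and ve: "flipv n v = (\<lambda>S. \<Sum>x\<le>n - w. (Rop n ^^ (n - w - x)) (k x) S)"
    using decomp_low[OF le fh] by blast
  define vv where "vv x = (if x \<le> n - w then flipv n ((Rop n ^^ (n - w - x)) (k x)) else zv)" for x
  have "vv x \<in> isotypic n x" for x
  proof (cases "x \<le> n - w")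
    case True
    then have "k x \<in> specht n x" using k ker_specht le by simp
    then show ?thesis using True flip_Rpow_iso unfolding vv_def by simp
  qed (simp add: vv_def subsp_zero[OF iso_subsp])
  moreover have "v = (\<lambda>S. \<Sum>x\<le>n div 2. vv x S)"
  proof
    fix S
    have "v = flipv n (flipv n v)" using flip_flip hom_qspace[OF assms(1)] by simp
    also have "\<dots> = (\<lambda>S. \<Sum>x\<le>n - w. flipv n ((Rop n ^^ (n - w - x)) (k x)) S)"
      unfolding ve by (rule lin_sum1[OF lin_flip]) simp
    finally have "v S = (\<Sum>x\<le>n - w. vv x S)" unfolding vv_def by simp
    also have "\<dots> = (\<Sum>x\<le>n div 2. vv x S)"
      by (rule sum.mono_neutral_left) (use le in \<open>auto simp: vv_def zv_def\<close>)
    finally show "v S = (\<Sum>x\<le>n div 2. vv x S)" .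
  qed
  ultimately show ?thesis by blast
qed

definition Off :: "nat \<Rightarrow> (nat \<times> nat) set" where "Off n = Sigma {..<n} (\<lambda>i. {..<n} - {i})"
definition Kop :: "nat \<Rightarrow> qvec \<Rightarrow> qvec" where
  "Kop n v = (\<lambda>S. \<Sum>p\<in>Off n. v S - perm_act (transpose (fst p) (snd p)) v S)"
definition lam :: "nat \<Rightarrow> nat \<Rightarrow> real" where "lam n x = 2 * real x * (real n - real x + 1)"

lemma finite_Off: "finite (Off n)" by (simp add: Off_def)

lemma lin_Kop: "lin (Kop n)"
  by (simp add: lin_def Kop_def perm_act_def qadd_def qscale_def fun_eq_iff sum.distrib sum_distrib_left
      sum_subtractf algebra_simps)

lemma perm_tr: "perm_act (transpose i j) v S = v (transpose i j ` S)"
  by (simp add: perm_act_def)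

lemma tr_image:
  assumes "i \<noteq> j"
  shows "transpose i j ` S = (if i \<in> S \<and> j \<notin> S then insert j (S - {i}) else if j \<in> S \<and> i \<notin> S then insert i (S - {j}) else S)"
proof (cases "i \<in> S \<longleftrightarrow> j \<in> S")
  case True then show ?thesis by auto
next
  case False then show ?thesis using assms
    by (intro set_eqI) (auto simp: in_transpose_image_iff transpose_def)
qed

lemma K_formula:
  assumes S: "S \<subseteq> {..<n}"
  shows "Kop n v S = 2 * (of_nat (card S) * (of_nat n - of_nat (card S) + 1) * v S - Rop n (Lop n v) S)"
proof -
  have f: "finite S" using S by (rule finite_sub)
  define D where "D = (\<Sum>j\<in>S. \<Sum>i\<in>{..<n} - S. v (insert i (S - {j})))"
  have cS: "card ({..<n} - S) = n - card S" using S f by (simp add: card_Diff_subset)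
  have cle: "card S \<le> n" using S by (metis card_lessThan card_mono finite_lessThan)
  have "Kop n v S = (\<Sum>p\<in>Off n. v S - v (transpose (fst p) (snd p) ` S))"
    by (simp add: Kop_def perm_tr)
  also have "\<dots> = (\<Sum>(i,j)\<in>Off n. v S - v (transpose i j ` S))" by (simp only: split_def)
  also have "\<dots> = (\<Sum>i<n. \<Sum>j\<in>{..<n} - {i}. v S - v (transpose i j ` S))"
    unfolding Off_def by (rule sum.Sigma[symmetric]) auto
  also have "\<dots> = (\<Sum>i\<in>S. \<Sum>j\<in>{..<n} - {i}. v S - v (transpose i j ` S))
      + (\<Sum>i\<in>{..<n} - S. \<Sum>j\<in>{..<n} - {i}. v S - v (transpose i j ` S))"
    by (simp add: sum.subset_diff[OF S finite_lessThan] add.commute)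
  also have "(\<Sum>i\<in>S. \<Sum>j\<in>{..<n} - {i}. v S - v (transpose i j ` S))
      = (\<Sum>i\<in>S. \<Sum>j\<in>{..<n} - S. v S - v (insert j (S - {i})))"
  proof (rule sum.cong[OF refl])
    fix i assume i: "i \<in> S"
    show "(\<Sum>j\<in>{..<n} - {i}. v S - v (transpose i j ` S)) = (\<Sum>j\<in>{..<n} - S. v S - v (insert j (S - {i})))"
    proof (rule sum.mono_neutral_cong_right)
      show "{..<n} - S \<subseteq> {..<n} - {i}" using i by auto
      show "\<forall>j\<in>{..<n} - {i} - ({..<n} - S). v S - v (transpose i j ` S) = 0"
        using i by auto
      show "v S - v (transpose i j ` S) = v S - v (insert j (S - {i}))" if j: "j \<in> {..<n} - S" for j
      proof -
        have "i \<noteq> j" using i j by auto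
        then show ?thesis using i j by (simp add: tr_image)
      qed
    qed simp
  qed
  also have "(\<Sum>i\<in>{..<n} - S. \<Sum>j\<in>{..<n} - {i}. v S - v (transpose i j ` S))
      = (\<Sum>i\<in>{..<n} - S. \<Sum>j\<in>S. v S - v (insert i (S - {j})))"
  proof (rule sum.cong[OF refl])
    fix i assume i: "i \<in> {..<n} - S"
    show "(\<Sum>j\<in>{..<n} - {i}. v S - v (transpose i j ` S)) = (\<Sum>j\<in>S. v S - v (insert i (S - {j})))"
    proof (rule sum.mono_neutral_cong_right)
      show "S \<subseteq> {..<n} - {i}" using i S by auto
      show "\<forall>j\<in>{..<n} - {i} - S. v S - v (transpose i j ` S) = 0"
        using i by auto
      show "v S - v (transpose i j ` S) = v S - v (insert i (S - {j}))" if j: "j \<in> S" for j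
      proof -
        have "i \<noteq> j" using i j by auto
        then show ?thesis using i j by (simp add: tr_image)
      qed
    qed simp
  qed
  also have "(\<Sum>i\<in>S. \<Sum>j\<in>{..<n} - S. v S - v (insert j (S - {i}))) = of_nat (card S) * of_nat (n - card S) * v S - D"
    unfolding D_def by (simp add: sum_subtractf cS)
  also have "(\<Sum>i\<in>{..<n} - S. \<Sum>j\<in>S. v S - v (insert i (S - {j}))) = of_nat (card S) * of_nat (n - card S) * v S - D"
    unfolding D_def by (simp add: sum_subtractf cS sum.swap[of _ "{..<n} - S"])
  finally have K: "Kop n v S = 2 * (of_nat (card S) * of_nat (n - card S) * v S - D)" by simp
  have RL: "Rop n (Lop n v) S = of_nat (card S) * v S + D" unfolding D_def by (rule RL_formula[OF S])
  have e: "(of_nat (n - card S) :: complex) = of_nat n - of_nat (card S)" using cle by (simp add: of_nat_diff)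
  show ?thesis unfolding K RL e by (simp add: algebra_simps)
qed

lemma RL_hom: assumes "v \<in> hom n w" shows "Rop n (Lop n v) \<in> hom n w"
proof (cases w)
  case 0
  then have "Lop n v = zv" using Lop_hom0 assms by simp
  then show ?thesis using lin_zero[OF lin_Rop] subsp_zero[OF subsp_hom] by simp
next
  case (Suc w') then show ?thesis using Rop_hom[OF Lop_hom[OF assms]] by simp
qed

lemma tr_sub: "i < n \<Longrightarrow> j < n \<Longrightarrow> transpose i j ` S \<subseteq> {..<n} \<longleftrightarrow> S \<subseteq> {..<n}"
  using perm_sub[OF permutes_swap_id[of i "{..<n}" j]] by (simp add: bij_vimage_eq_inv_image)

lemma K_hom:
  assumes "v \<in> hom n w"
  shows "Kop n v = (\<lambda>S. 2 * (of_nat w * (of_nat n - of_nat w + 1)) * v S - 2 * Rop n (Lop n v) S)"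
proof
  fix S
  show "Kop n v S = 2 * (of_nat w * (of_nat n - of_nat w + 1)) * v S - 2 * Rop n (Lop n v) S"
  proof (cases "S \<subseteq> {..<n}")
    case True
    show ?thesis
    proof (cases "card S = w")
      case True then show ?thesis using K_formula[OF \<open>S \<subseteq> {..<n}\<close>] by simp
    next
      case False
      then show ?thesis using K_formula[OF \<open>S \<subseteq> {..<n}\<close>, of v] homD[OF assms False] homD[OF RL_hom[OF assms] False]
        by simp
    qed
  next
    case False
    have "v (transpose (fst p) (snd p) ` S) = 0" if "p \<in> Off n" for p
      using that False tr_sub[of "fst p" n "snd p" S] homD2[OF assms] by (auto simp: Off_def)
    then show ?thesis using False homD2[OF assms] by (simp add: Kop_def perm_tr Rop_def)
  qed
qed

lemma K_specht: assumes "u \<in> specht n x" shows "Kop n u = qscale (of_real (lam n x)) u"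
proof -
  have "Rop n (Lop n u) = zv" using specht_ker[OF assms] lin_zero[OF lin_Rop] by simp
  then show ?thesis using K_hom[OF specht_hom[OF assms]] by (simp add: qscale_def lam_def zv_def mult.assoc)
qed

lemma tr_inner:
  assumes "i < n" "j < n"
  shows "(\<Sum>S\<in>Pow {..<n}. cnj (u S) * v (transpose i j ` S)) = (\<Sum>S\<in>Pow {..<n}. cnj (u (transpose i j ` S)) * v S)"
  by (rule sum.reindex_bij_witness[where i = "\<lambda>S. transpose i j ` S" and j = "\<lambda>S. transpose i j ` S"])
     (use tr_sub[OF assms] in \<open>auto simp: image_image\<close>)

lemma K_selfadj: "qinner n u (Kop n v) = qinner n (Kop n u) v"
proof -
  let ?t = "\<lambda>p. transpose (fst p) (snd p)"
  have "qinner n u (Kop n v) = (\<Sum>S\<in>Pow {..<n}. \<Sum>p\<in>Off n. cnj (u S) * (v S - v (?t p ` S)))"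
    unfolding qinner_def Kop_def perm_tr by (simp only: sum_distrib_left)
  also have "\<dots> = (\<Sum>p\<in>Off n. \<Sum>S\<in>Pow {..<n}. cnj (u S) * (v S - v (?t p ` S)))" by (rule sum.swap)
  also have "\<dots> = (\<Sum>p\<in>Off n. (\<Sum>S\<in>Pow {..<n}. cnj (u S) * v S) - (\<Sum>S\<in>Pow {..<n}. cnj (u S) * v (?t p ` S)))"
    by (simp only: right_diff_distrib sum_subtractf)
  also have "\<dots> = (\<Sum>p\<in>Off n. (\<Sum>S\<in>Pow {..<n}. cnj (u S) * v S) - (\<Sum>S\<in>Pow {..<n}. cnj (u (?t p ` S)) * v S))"
    by (rule sum.cong[OF refl]) (auto simp: Off_def tr_inner)
  also have "\<dots> = (\<Sum>p\<in>Off n. \<Sum>S\<in>Pow {..<n}. (cnj (u S) - cnj (u (?t p ` S))) * v S)"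
    by (simp only: left_diff_distrib sum_subtractf)
  also have "\<dots> = (\<Sum>S\<in>Pow {..<n}. \<Sum>p\<in>Off n. (cnj (u S) - cnj (u (?t p ` S))) * v S)" by (rule sum.swap)
  also have "\<dots> = qinner n (Kop n u) v"
    unfolding qinner_def Kop_def perm_tr by (simp only: cnj_sum complex_cnj_diff sum_distrib_right)
  finally show ?thesis .
qed

lemma equiv_diff: "f \<in> equivariant_maps n x \<Longrightarrow> a \<in> specht n x \<Longrightarrow> b \<in> specht n x \<Longrightarrow> f (qdiff a b) = qdiff (f a) (f b)"
proof -
  assume f: "f \<in> equivariant_maps n x" and ab: "a \<in> specht n x" "b \<in> specht n x"
  have e: "qdiff a b = qadd a (qscale (-1) b)" "qdiff (f a) (f b) = qadd (f a) (qscale (-1) (f b))"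
    by (simp_all add: qdiff_def qadd_def qscale_def)
  have "qscale (-1) b \<in> specht n x" using subsp_scale[OF specht_subsp ab(2)] .
  then show ?thesis using f ab unfolding e equivariant_maps_def by simp
qed

lemma equiv_sum:
  assumes f: "f \<in> equivariant_maps n x" and A: "finite A" "\<And>a. a \<in> A \<Longrightarrow> g a \<in> specht n x"
  shows "f (\<lambda>S. \<Sum>a\<in>A. g a S) = (\<lambda>S. \<Sum>a\<in>A. f (g a) S)"
  using A
proof (induction A rule: finite_induct)
  case empty
  have z: "zv \<in> specht n x" by (rule subsp_zero[OF specht_subsp])
  have "f (qscale 0 zv) = qscale 0 (f zv)" using f z unfolding equivariant_maps_def by blast
  then show ?case by (simp add: qscale_def zv_def)
next
  case (insert y F)
  have s: "(\<lambda>S. \<Sum>a\<in>F. g a S) \<in> specht n x" by (rule subsp_sum1[OF specht_subsp insert(1)]) (use insert in auto)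
  have "(\<lambda>S. \<Sum>a\<in>insert y F. g a S) = qadd (g y) (\<lambda>S. \<Sum>a\<in>F. g a S)"
    using insert by (simp add: qadd_def)
  moreover have "f (qadd (g y) (\<lambda>S. \<Sum>a\<in>F. g a S)) = qadd (f (g y)) (f (\<lambda>S. \<Sum>a\<in>F. g a S))"
    using f s insert(4) unfolding equivariant_maps_def by simp
  ultimately show ?case using insert by (simp add: qadd_def)
qed

lemma K_equiv:
  assumes f: "f \<in> equivariant_maps n x" and u: "u \<in> specht n x"
  shows "Kop n (f u) = qscale (of_real (lam n x)) (f u)"
proof -
  have tp: "transpose (fst p) (snd p) permutes {..<n}" if "p \<in> Off n" for p
    using that by (auto simp: Off_def intro!: permutes_swap_id)
  have ps: "perm_act (transpose (fst p) (snd p)) u \<in> specht n x" if "p \<in> Off n" for p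
    using specht_perm[OF tp[OF that] u] .
  have "Kop n (f u) = (\<lambda>S. \<Sum>p\<in>Off n. f (qdiff u (perm_act (transpose (fst p) (snd p)) u)) S)"
    unfolding Kop_def
  proof (rule ext, rule sum.cong[OF refl])
    fix S p assume p: "p \<in> Off n"
    have "perm_act (transpose (fst p) (snd p)) (f u) = f (perm_act (transpose (fst p) (snd p)) u)"
      using f u tp[OF p] unfolding equivariant_maps_def by simp
    then show "f u S - perm_act (transpose (fst p) (snd p)) (f u) S = f (qdiff u (perm_act (transpose (fst p) (snd p)) u)) S"
      using equiv_diff[OF f u ps[OF p]] by (simp add: qdiff_def)
  qed
  also have "\<dots> = f (\<lambda>S. \<Sum>p\<in>Off n. qdiff u (perm_act (transpose (fst p) (snd p)) u) S)"
    by (rule equiv_sum[OF f finite_Off, symmetric]) (use subsp_diff[OF specht_subsp u ps] in auto)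
  also have "(\<lambda>S. \<Sum>p\<in>Off n. qdiff u (perm_act (transpose (fst p) (snd p)) u) S) = Kop n u"
    by (simp add: Kop_def qdiff_def)
  also have "\<dots> = qscale (of_real (lam n x)) u" by (rule K_specht[OF u])
  also have "f \<dots> = qscale (of_real (lam n x)) (f u)" using f u unfolding equivariant_maps_def by simp
  finally show ?thesis .
qed

lemma iso_eigen_qspace: assumes "y \<in> isotypic n x" shows "Kop n y = qscale (of_real (lam n x)) y \<and> y \<in> qspace n"
proof -
  let ?W = "{y. Kop n y = qscale (of_real (lam n x)) y \<and> y \<in> qspace n}"
  have "subsp ?W" unfolding subsp_def
  proof (intro conjI ballI allI)
    show "zv \<in> ?W" using lin_zero[OF lin_Kop] subsp_zero[OF subsp_qspace] by (simp add: qscale_def zv_def)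
  next
    fix u v assume uv: "u \<in> ?W" "v \<in> ?W"
    have "Kop n (qadd u v) = qadd (Kop n u) (Kop n v)" by (rule lin_add[OF lin_Kop])
    then show "qadd u v \<in> ?W" using uv subsp_add[OF subsp_qspace]
      by (simp add: qadd_def qscale_def fun_eq_iff algebra_simps)
  next
    fix u c assume u: "u \<in> ?W"
    have "Kop n (qscale c u) = qscale c (Kop n u)" by (rule lin_scale[OF lin_Kop])
    then show "qscale c u \<in> ?W" using u subsp_scale[OF subsp_qspace]
      by (simp add: qscale_def fun_eq_iff algebra_simps)
  qed
  moreover have "(\<Union>f\<in>equivariant_maps n x. f ` specht n x) \<subseteq> ?W"
    using K_equiv by (auto simp: equivariant_maps_def)
  ultimately have "isotypic n x \<subseteq> ?W" unfolding isotypic_def by (rule qspan_least)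
  then show ?thesis using assms by blast
qed

lemma iso_orth:
  assumes "y1 \<in> isotypic n x1" "y2 \<in> isotypic n x2" "x1 \<noteq> x2" "x1 + x2 \<le> n"
  shows "qinner n y1 y2 = 0"
proof -
  have "qinner n y1 (Kop n y2) = of_real (lam n x2) * qinner n y1 y2"
    using iso_eigen_qspace[OF assms(2)] by (simp add: qscale_def qinner_scale_right)
  moreover have "qinner n (Kop n y1) y2 = of_real (lam n x1) * qinner n y1 y2"
    using iso_eigen_qspace[OF assms(1)] by (simp add: qscale_def qinner_def sum_distrib_left algebra_simps)
  ultimately have "(of_real (lam n x1) - of_real (lam n x2)) * qinner n y1 y2 = 0"
    using K_selfadj[of n y1 y2] by (simp add: algebra_simps)
  moreover have "lam n x1 \<noteq> lam n x2"
  proof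
    assume "lam n x1 = lam n x2"
    then have "(real x1 - real x2) * (real n + 1 - real x1 - real x2) = 0"
      unfolding lam_def by (simp add: algebra_simps)
    moreover have "real n + 1 - real x1 - real x2 > 0" using assms(4) by simp
    ultimately have "real x1 = real x2" by simp
    then show False using assms(3) by simp
  qed
  ultimately show ?thesis by (metis mult_eq_0_iff of_real_diff of_real_eq_0_iff right_minus_eq)
qed

lemma qinner_diff_right: "qinner n u (\<lambda>S. a S - b S) = qinner n u a - qinner n u b"
  unfolding qinner_def by (simp add: right_diff_distrib sum_subtractf)

lemma qinner_sum_right: "finite A \<Longrightarrow> qinner n u (\<lambda>S. \<Sum>y\<in>A. a y * f y S) = (\<Sum>y\<in>A. a y * qinner n u (f y))"
  unfolding qinner_def by (simp add: sum_distrib_left sum.swap[of _ A] algebra_simps)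

lemma qinner_sum_left: "finite A \<Longrightarrow> qinner n (\<lambda>S. \<Sum>y\<in>A. a y * f y S) w = (\<Sum>y\<in>A. cnj (a y) * qinner n (f y) w)"
  unfolding qinner_def by (simp add: sum_distrib_left sum_distrib_right sum.swap[of _ A] algebra_simps)

lemma orth_proj_eq:
  assumes W: "subsp W" "W \<subseteq> qspace n" and w: "w \<in> W" and o: "\<And>u. u \<in> W \<Longrightarrow> qinner n u (qdiff v w) = 0"
  shows "orth_proj n W v = w"
  unfolding orth_proj_def
proof (rule the_equality)
  show "w \<in> W \<and> (\<forall>u\<in>W. qinner n u (qdiff v w) = 0)" using w o by blast
next
  fix w' assume w': "w' \<in> W \<and> (\<forall>u\<in>W. qinner n u (qdiff v w') = 0)"
  define d where "d = qdiff w' w"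
  have dW: "d \<in> W" unfolding d_def using subsp_diff[OF W(1)] w w' by blast
  have "qinner n d (qdiff v w) = 0" "qinner n d (qdiff v w') = 0" using o dW w' by auto
  moreover have "d = (\<lambda>S. qdiff v w S - qdiff v w' S)" unfolding d_def qdiff_def by auto
  ultimately have "qinner n d d = 0" using qinner_diff_right[of n d "qdiff v w" "qdiff v w'"] by simp
  then have "nrm n d = 0" by (simp add: qinner_self)
  then have "d = zv" using nrm_zero dW W(2) by blast
  then show "w' = w" unfolding d_def by (auto simp: qdiff_def zv_def fun_eq_iff)
qed

lemma orth_family_inner:
  assumes A: "finite A" and o: "\<And>x y. x \<in> A \<Longrightarrow> y \<in> A \<Longrightarrow> x \<noteq> y \<Longrightarrow> qinner n (f x) (f y) = 0"
  shows "qinner n (\<lambda>S. \<Sum>x\<in>A. a x * f x S) (\<lambda>S. \<Sum>y\<in>A. b y * f y S) = (\<Sum>x\<in>A. cnj (a x) * b x * qinner n (f x) (f x))"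
proof -
  have "qinner n (\<lambda>S. \<Sum>x\<in>A. a x * f x S) (\<lambda>S. \<Sum>y\<in>A. b y * f y S)
      = (\<Sum>x\<in>A. cnj (a x) * (\<Sum>y\<in>A. b y * qinner n (f x) (f y)))"
    by (simp add: qinner_sum_left[OF A] qinner_sum_right[OF A])
  also have "\<dots> = (\<Sum>x\<in>A. cnj (a x) * (b x * qinner n (f x) (f x)))"
  proof (rule sum.cong[OF refl])
    fix x assume x: "x \<in> A"
    have "(\<Sum>y\<in>A. b y * qinner n (f x) (f y)) = b x * qinner n (f x) (f x) + (\<Sum>y\<in>A - {x}. b y * qinner n (f x) (f y))"
      using A x by (simp add: sum.remove)
    also have "(\<Sum>y\<in>A - {x}. b y * qinner n (f x) (f y)) = 0" using o x by (intro sum.neutral) auto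
    finally show "cnj (a x) * (\<Sum>y\<in>A. b y * qinner n (f x) (f y)) = cnj (a x) * (b x * qinner n (f x) (f x))" by simp
  qed
  finally show ?thesis by (simp add: mult.assoc)
qed

locale decomp_data =
  fixes n :: nat and v :: qvec and vv :: "nat \<Rightarrow> qvec"
  assumes vv_iso: "\<And>x. vv x \<in> isotypic n x"
    and v_eq: "v = (\<lambda>S. \<Sum>x\<le>n div 2. vv x S)"
begin

lemma vv_orth: "x \<le> n div 2 \<Longrightarrow> y \<le> n div 2 \<Longrightarrow> x \<noteq> y \<Longrightarrow> qinner n (vv x) (vv y) = 0"
  by (rule iso_orth[OF vv_iso vv_iso]) auto

lemma v_eq1: "v = (\<lambda>S. \<Sum>x\<le>n div 2. 1 * vv x S)" using v_eq by simp

lemma proj: assumes "x \<le> n div 2" shows "orth_proj n (isotypic n x) v = vv x"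
proof (rule orth_proj_eq[OF iso_subsp _ vv_iso])
  show "isotypic n x \<subseteq> qspace n" using iso_eigen_qspace by blast
  fix u assume u: "u \<in> isotypic n x"
  have "qdiff v (vv x) = (\<lambda>S. v S - vv x S)" by (simp add: qdiff_def)
  then have "qinner n u (qdiff v (vv x)) = qinner n u v - qinner n u (vv x)" by (simp add: qinner_diff_right)
  also have "qinner n u v = (\<Sum>y\<le>n div 2. 1 * qinner n u (vv y))"
    by (subst v_eq1) (rule qinner_sum_right, simp)
  also have "\<dots> = qinner n u (vv x) + (\<Sum>y\<in>{..n div 2} - {x}. qinner n u (vv y))"
    using assms by (simp add: sum.remove)
  also have "(\<Sum>y\<in>{..n div 2} - {x}. qinner n u (vv y)) = 0"
    using assms by (intro sum.neutral) (auto intro!: iso_orth[OF u vv_iso])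
  finally show "qinner n u (qdiff v (vv x)) = 0" by simp
qed

lemma weighted:
  fixes a :: "nat \<Rightarrow> real"
  shows "nrm n (\<lambda>S. \<Sum>x\<le>n div 2. of_real (a x) * vv x S) = (\<Sum>x\<le>n div 2. (a x)^2 * nrm n (vv x))"
proof -
  have "complex_of_real (nrm n (\<lambda>S. \<Sum>x\<le>n div 2. of_real (a x) * vv x S))
      = (\<Sum>x\<le>n div 2. cnj (of_real (a x)) * of_real (a x) * qinner n (vv x) (vv x))"
    unfolding qinner_self[symmetric] by (rule orth_family_inner) (auto intro: vv_orth)
  also have "\<dots> = complex_of_real (\<Sum>x\<le>n div 2. (a x)^2 * nrm n (vv x))"
    by (simp add: qinner_self power2_eq_square)
  finally show ?thesis using of_real_eq_iff by blast
qed

lemma pmf_val: assumes "x \<le> n div 2" shows "Re (qinner n v (orth_proj n (isotypic n x) v)) = nrm n (vv x)"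
proof -
  have "qinner n v (vv x) = (\<Sum>y\<le>n div 2. cnj 1 * qinner n (vv y) (vv x))"
    by (subst v_eq1) (rule qinner_sum_left, simp)
  also have "\<dots> = qinner n (vv x) (vv x) + (\<Sum>y\<in>{..n div 2} - {x}. qinner n (vv y) (vv x))"
    using assms by (simp add: sum.remove)
  also have "(\<Sum>y\<in>{..n div 2} - {x}. qinner n (vv y) (vv x)) = 0"
    using assms by (intro sum.neutral) (auto intro!: vv_orth)
  finally show ?thesis using proj[OF assms] by (simp add: qinner_self)
qed

lemma total: "(\<Sum>x\<le>n div 2. nrm n (vv x)) = nrm n v"
  using weighted[of "\<lambda>_. 1"] v_eq by simp

lemma K_v: "Kop n v = (\<lambda>S. \<Sum>x\<le>n div 2. of_real (lam n x) * vv x S)"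
  apply (subst v_eq)
  apply (subst lin_sum1[OF lin_Kop], simp)
  using iso_eigen_qspace[OF vv_iso] by (simp add: qscale_def)

lemma second_moment:
  fixes c :: real
  shows "nrm n (\<lambda>S. Kop n v S - of_real c * v S) = (\<Sum>x\<le>n div 2. (lam n x - c)^2 * nrm n (vv x))"
proof -
  have "(\<lambda>S. Kop n v S - of_real c * v S) = (\<lambda>S. \<Sum>x\<le>n div 2. of_real (lam n x - c) * vv x S)"
    unfolding K_v by (subst v_eq) (simp add: sum_subtractf sum_distrib_left algebra_simps)
  then show ?thesis using weighted[of "\<lambda>x. lam n x - c"] by (simp del: of_real_diff)
qed

end

lemma move_k:
  fixes i j k :: nat and S :: "nat set"
  assumes "k \<le> i" "k \<le> j" "j \<in> S" "i \<notin> S" "finite S"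
  shows "insert i (S - {j}) \<inter> {..<k} = S \<inter> {..<k}"
    and "card (insert i (S - {j}) - {..<k}) = card (S - {..<k})"
proof -
  show "insert i (S - {j}) \<inter> {..<k} = S \<inter> {..<k}" using assms by auto
  have e: "insert i (S - {j}) - {..<k} = insert i ((S - {..<k}) - {j})" using assms by auto
  have j: "j \<in> S - {..<k}" using assms by auto
  have i: "i \<notin> (S - {..<k}) - {j}" using assms by auto
  have f: "finite (S - {..<k})" using assms by auto
  have "card (insert i ((S - {..<k}) - {j})) = Suc (card ((S - {..<k}) - {j}))" using i f by simp
  also have "\<dots> = card (S - {..<k})" by (rule card_Suc_Diff1[OF f j])
  finally show "card (insert i (S - {j}) - {..<k}) = card (S - {..<k})" unfolding e .
qed

locale xi_setup =
  fixes n k l M :: nat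
  assumes lk: "l \<le> k" and kn: "k \<le> n" and Mle: "M \<le> n - k"
begin

definition TT :: "nat set set" where "TT = {T. T \<subseteq> {..<n} \<and> T \<inter> {..<k} = {..<l} \<and> card (T - {..<k}) = M}"
definition bb :: real where "bb = real ((n - k) choose M)"
definition nu :: complex where "nu = complex_of_real (1 / sqrt bb)"

lemma bb_pos: "bb > 0" unfolding bb_def using Mle by simp

lemma TT_sub: "T \<in> TT \<Longrightarrow> T \<subseteq> {..<n}" by (simp add: TT_def)
lemma TT_fin: "finite TT" by (rule finite_subset[of _ "Pow {..<n}"]) (auto simp: TT_def)

lemma Xi_eq: "Xi n (l + M) k l = (\<lambda>T. if T \<in> TT then nu else 0)"
  by (simp add: Xi_def TT_def nu_def bb_def fun_eq_iff)

lemma card_TT: "card TT = (n - k) choose M"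
proof -
  have "bij_betw (\<lambda>U. {..<l} \<union> U) {U. U \<subseteq> {k..<n} \<and> card U = M} TT"
  proof (rule bij_betw_byWitness[where f' = "\<lambda>T. T - {..<k}"])
    show "\<forall>U\<in>{U. U \<subseteq> {k..<n} \<and> card U = M}. ({..<l} \<union> U) - {..<k} = U" using lk by auto
    show "\<forall>T\<in>TT. {..<l} \<union> (T - {..<k}) = T" unfolding TT_def by auto
    show "(\<lambda>U. {..<l} \<union> U) ` {U. U \<subseteq> {k..<n} \<and> card U = M} \<subseteq> TT"
    proof
      fix T assume "T \<in> (\<lambda>U. {..<l} \<union> U) ` {U. U \<subseteq> {k..<n} \<and> card U = M}"
      then obtain U where U: "U \<subseteq> {k..<n}" "card U = M" "T = {..<l} \<union> U" by auto
      have "({..<l} \<union> U) - {..<k} = U" using U(1) lk by auto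
      then show "T \<in> TT" unfolding TT_def using U lk kn by auto
    qed
    show "(\<lambda>T. T - {..<k}) ` TT \<subseteq> {U. U \<subseteq> {k..<n} \<and> card U = M}"
      unfolding TT_def by auto
  qed
  then have "card TT = card {U. U \<subseteq> {k..<n} \<and> card U = M}" by (simp add: bij_betw_same_card)
  also have "\<dots> = (n - k) choose M" by (simp add: n_subsets)
  finally show ?thesis .
qed

lemma Xi_hom: "Xi n (l + M) k l \<in> hom n (l + M)"
  unfolding hom_def qspace_def Xi_eq
proof (intro CollectI conjI allI impI)
  fix S assume "\<not> S \<subseteq> {..<n}" then show "(if S \<in> TT then nu else 0) = 0" using TT_sub by auto
next
  fix S :: "nat set" assume c: "card S \<noteq> l + M"
  have "card S = l + M" if "S \<in> TT"
  proof -
    have f: "finite S" using TT_sub[OF that] finite_sub by blast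
    have "S = (S \<inter> {..<k}) \<union> (S - {..<k})" by auto
    then have "card S = card (S \<inter> {..<k}) + card (S - {..<k})"
      using f by (metis card_Int_Diff)
    then show ?thesis using that unfolding TT_def by simp
  qed
  then show "(if S \<in> TT then nu else 0) = 0" using c by auto
qed

lemma nu_sq: "(cmod nu)^2 = 1 / bb"
proof -
  have "cmod nu = \<bar>1 / sqrt bb\<bar>" unfolding nu_def by (rule norm_of_real)
  then have "cmod nu = 1 / sqrt bb" using bb_pos by simp
  then show ?thesis using bb_pos by (simp add: power_divide)
qed

lemma Xi_nrm: "nrm n (Xi n (l + M) k l) = 1"
proof -
  have "nrm n (Xi n (l + M) k l) = (\<Sum>T\<in>Pow {..<n}. if T \<in> TT then (cmod nu)^2 else 0)"
    unfolding nrm_def Xi_eq by (intro sum.cong) auto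
  also have "\<dots> = (\<Sum>T\<in>TT. if T \<in> TT then (cmod nu)^2 else 0)"
    by (rule sum.mono_neutral_right) (auto simp: TT_def)
  also have "\<dots> = (\<Sum>T\<in>TT. (cmod nu)^2)" by simp
  also have "\<dots> = 1" using bb_pos by (simp add: nu_sq card_TT bb_def)
  finally show ?thesis .
qed

end

context xi_setup
begin

abbreviation XX where "XX \<equiv> Xi n (l + M) k l"

definition Cs :: "nat set \<Rightarrow> (nat \<times> nat) set" where
  "Cs S = {p \<in> S \<times> ({..<n} - S). insert (snd p) (S - {fst p}) \<in> TT}"

definition c0 :: complex where "c0 = of_nat (l + M + M * (n - k - M))"

definition EE :: qvec where "EE = (\<lambda>S. Rop n (Lop n XX) S - c0 * XX S)"

lemma finite_Cs: "S \<subseteq> {..<n} \<Longrightarrow> finite (Cs S)"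
  unfolding Cs_def by (rule finite_subset[of _ "S \<times> {..<n}"]) (auto intro: finite_sub)

lemma RL_Xi:
  assumes S: "S \<subseteq> {..<n}"
  shows "Rop n (Lop n XX) S = of_nat (card S) * XX S + nu * of_nat (card (Cs S))"
proof -
  have f: "finite S" using S by (rule finite_sub)
  have "(\<Sum>j\<in>S. \<Sum>i\<in>{..<n} - S. XX (insert i (S - {j})))
      = (\<Sum>p\<in>S \<times> ({..<n} - S). if insert (snd p) (S - {fst p}) \<in> TT then nu else 0)"
    unfolding Xi_eq by (subst sum.cartesian_product) (simp add: split_def)
  also have "\<dots> = (\<Sum>p\<in>Cs S. nu)" unfolding Cs_def using f by (subst sum.inter_filter) auto
  also have "\<dots> = nu * of_nat (card (Cs S))" by simp
  finally show ?thesis using RL_formula[OF S, of XX] by simp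
qed

lemma Cs_in:
  assumes S: "S \<in> TT"
  shows "card (Cs S) = M * (n - k - M)"
proof -
  have Sn: "S \<subseteq> {..<n}" and Sk: "S \<inter> {..<k} = {..<l}" and Sc: "card (S - {..<k}) = M"
    using S by (auto simp: TT_def)
  have f: "finite S" using Sn by (rule finite_sub)
  have "Cs S = (S - {..<k}) \<times> ({k..<n} - S)"
  proof (intro set_eqI iffI)
    fix p assume p: "p \<in> Cs S"
    obtain j i where ji: "p = (j, i)" by fastforce
    have j: "j \<in> S" and i: "i < n" "i \<notin> S" and T: "insert i (S - {j}) \<in> TT"
      using p ji by (auto simp: Cs_def)
    have Tk: "insert i (S - {j}) \<inter> {..<k} = {..<l}" using T by (simp add: TT_def)
    have "\<not> j < k"
    proof
      assume "j < k"
      then have "j < l" using j Sk by auto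
      then have "j \<in> insert i (S - {j})" using Tk \<open>j < k\<close> lk by auto
      then show False using i j by auto
    qed
    moreover have "\<not> i < k"
    proof
      assume "i < k"
      then have "i < l" using Tk by auto
      then have "i \<in> S" using Sk lk by auto
      then show False using i by simp
    qed
    ultimately show "p \<in> (S - {..<k}) \<times> ({k..<n} - S)" using ji j i by auto
  next
    fix p assume p: "p \<in> (S - {..<k}) \<times> ({k..<n} - S)"
    obtain j i where ji: "p = (j, i)" by fastforce
    have j: "j \<in> S" "k \<le> j" and i: "i < n" "i \<notin> S" "k \<le> i" using p ji by auto
    note mk = move_k[OF i(3) j(2) j(1) i(2) f]
    have "insert i (S - {j}) \<in> TT" unfolding TT_def using mk Sn Sk Sc i by auto
    then show "p \<in> Cs S" unfolding Cs_def using ji j i by auto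
  qed
  moreover have "card ({k..<n} - S) = n - k - M"
  proof -
    have "{k..<n} \<inter> S = S - {..<k}" using Sn by auto
    then have "card ({k..<n} - S) = card {k..<n} - card (S - {..<k})"
      by (metis card_Diff_subset_Int finite_atLeastLessThan finite_Int inf_commute)
    then show ?thesis using Sc by simp
  qed
  ultimately show ?thesis using Sc by (simp add: card_cartesian_product)
qed

lemma Cs_out:
  assumes Sn: "S \<subseteq> {..<n}" and nS: "S \<notin> TT"
  shows "card (Cs S) \<le> 2 * n"
proof -
  have f: "finite S" using Sn by (rule finite_sub)
  define j0 where "j0 = (SOME j. j \<in> S \<inter> {..<k} - {..<l})"
  define i0 where "i0 = (SOME i. i \<in> {..<l} - S)"
  have sub: "Cs S \<subseteq> ({j0} \<times> {..<n}) \<union> ({..<n} \<times> {i0})"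
  proof
    fix p assume p: "p \<in> Cs S"
    obtain j i where ji: "p = (j, i)" by fastforce
    have j: "j \<in> S" and i: "i < n" "i \<notin> S" and T: "insert i (S - {j}) \<in> TT"
      using p ji by (auto simp: Cs_def)
    have jn: "j < n" using j Sn by auto
    have Tk: "insert i (S - {j}) \<inter> {..<k} = {..<l}" using T by (simp add: TT_def)
    have ij: "i \<noteq> j" using i j by auto
    show "p \<in> ({j0} \<times> {..<n}) \<union> ({..<n} \<times> {i0})"
    proof (cases "j < k")
      case True
      have jm: "j \<in> S \<inter> {..<k} - {..<l}"
      proof -
        have "j \<notin> insert i (S - {j})" using ij by simp
        then have "j \<notin> {..<l}" using Tk True by blast
        then show ?thesis using j True by simp
      qed
      have uniq: "j' = j" if "j' \<in> S \<inter> {..<k} - {..<l}" for j'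
      proof (rule ccontr)
        assume "j' \<noteq> j"
        then have "j' \<in> insert i (S - {j}) \<inter> {..<k}" using that by auto
        then show False using Tk that by blast
      qed
      have "j0 \<in> S \<inter> {..<k} - {..<l}" unfolding j0_def by (rule someI[of _ j]) (rule jm)
      then have "j0 = j" by (rule uniq)
      then show ?thesis using ji i by auto
    next
      case False
      show ?thesis
      proof (cases "i < k")
        case True
        have im: "i \<in> {..<l} - S" using Tk True i by auto
        have uniq: "i' = i" if "i' \<in> {..<l} - S" for i'
        proof -
          have "i' \<in> insert i (S - {j})" using that Tk lk by auto
          then show ?thesis using that by auto
        qed
        have "i0 \<in> {..<l} - S" unfolding i0_def by (rule someI[of _ i]) (rule im)
        then have "i0 = i" by (rule uniq)
        then show ?thesis using ji jn by auto
      next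
        case False': False
        note mk = move_k[of k i j S] 
        have "S \<in> TT" unfolding TT_def using mk False False' j i f Sn T by (auto simp: TT_def)
        then show ?thesis using nS by simp
      qed
    qed
  qed
  have "card (Cs S) \<le> card (({j0} \<times> {..<n}) \<union> ({..<n} \<times> {i0}))"
    by (rule card_mono[OF _ sub]) simp
  also have "\<dots> \<le> card ({j0} \<times> {..<n}) + card ({..<n} \<times> {i0})" by (rule card_Un_le)
  also have "\<dots> = 2 * n" by (simp add: card_cartesian_product)
  finally show ?thesis .
qed

lemma EE_in: "S \<in> TT \<Longrightarrow> EE S = 0"
proof -
  assume S: "S \<in> TT"
  have Sn: "S \<subseteq> {..<n}" using S TT_sub by blast
  have cS: "card S = l + M"
  proof -
    have f: "finite S" using Sn finite_sub by blast
    have "S = (S \<inter> {..<k}) \<union> (S - {..<k})" by auto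
    then have "card S = card (S \<inter> {..<k}) + card (S - {..<k})"
      using f by (metis card_Int_Diff)
    then show ?thesis using S unfolding TT_def by simp
  qed
  have x: "XX S = nu" using S by (simp add: Xi_eq)
  show "EE S = 0" unfolding EE_def RL_Xi[OF Sn] Cs_in[OF S] c0_def x cS
    by (simp add: algebra_simps)
qed

lemma EE_out: "S \<subseteq> {..<n} \<Longrightarrow> S \<notin> TT \<Longrightarrow> EE S = nu * of_nat (card (Cs S))"
proof -
  assume S: "S \<subseteq> {..<n}" "S \<notin> TT"
  have x: "XX S = 0" using S by (simp add: Xi_eq)
  show ?thesis unfolding EE_def RL_Xi[OF S(1)] x by simp
qed

lemma EE_outside: "\<not> S \<subseteq> {..<n} \<Longrightarrow> EE S = 0"
  unfolding EE_def by (simp add: Rop_def Xi_eq TT_def)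

lemma EE_nrm: "nrm n EE \<le> 4 * real n ^ 3"
proof -
  define Q where "Q = Sigma (Pow {..<n} - TT) Cs"
  define Z where "Z = ({..<n} \<times> {..<k}) \<union> ({..<k} \<times> {..<n})"
  have "nrm n EE = (\<Sum>S\<in>Pow {..<n} - TT. (cmod (EE S))^2)"
    unfolding nrm_def by (rule sum.mono_neutral_right) (auto simp: EE_in)
  also have "\<dots> = (\<Sum>S\<in>Pow {..<n} - TT. (1 / bb) * real (card (Cs S)) * real (card (Cs S)))"
  proof (rule sum.cong[OF refl])
    fix S assume S: "S \<in> Pow {..<n} - TT"
    have "(cmod (EE S))^2 = (cmod nu)^2 * (real (card (Cs S)))^2"
      using S by (simp add: EE_out norm_mult power_mult_distrib)
    then show "(cmod (EE S))^2 = (1 / bb) * real (card (Cs S)) * real (card (Cs S))"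
      unfolding nu_sq by (simp add: power2_eq_square)
  qed
  also have "\<dots> \<le> (\<Sum>S\<in>Pow {..<n} - TT. (1 / bb) * real (card (Cs S)) * (2 * real n))"
  proof (rule sum_mono)
    fix S assume "S \<in> Pow {..<n} - TT"
    then have "card (Cs S) \<le> 2 * n" using Cs_out by blast
    then have "real (card (Cs S)) \<le> 2 * real n" by linarith
    then show "(1 / bb) * real (card (Cs S)) * real (card (Cs S)) \<le> (1 / bb) * real (card (Cs S)) * (2 * real n)"
      using bb_pos by (intro mult_left_mono) auto
  qed
  also have "\<dots> = (2 * real n / bb) * real (\<Sum>S\<in>Pow {..<n} - TT. card (Cs S))"
    by (simp add: sum_distrib_left sum_distrib_right of_nat_sum algebra_simps)
  also have "(\<Sum>S\<in>Pow {..<n} - TT. card (Cs S)) = card Q"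
    unfolding Q_def by (rule card_SigmaI[symmetric]) (auto intro: finite_Cs)
  finally have A: "nrm n EE \<le> (2 * real n / bb) * real (card Q)" .
  have "card Q \<le> card (TT \<times> Z)"
  proof (rule card_inj_on_le[where f = "\<lambda>(S, p). (insert (snd p) (S - {fst p}), p)"])
    show "inj_on (\<lambda>(S, p). (insert (snd p) (S - {fst p}), p)) Q"
    proof (rule inj_onI)
      fix x y assume x: "x \<in> Q" and y: "y \<in> Q" and fxy: "(\<lambda>(S, p). (insert (snd p) (S - {fst p}), p)) x = (\<lambda>(S, p). (insert (snd p) (S - {fst p}), p)) y"
      obtain S j i where xe: "x = (S, (j, i))" by (metis prod.collapse)
      obtain S' j' i' where ye: "y = (S', (j', i'))" by (metis prod.collapse)
      have a: "(S, (j, i)) \<in> Q" "(S', (j', i')) \<in> Q" using x y xe ye by auto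
      have e: "insert i (S - {j}) = insert i' (S' - {j'})" "j = j'" "i = i'" using fxy xe ye by auto
      have "j \<in> S" "i \<notin> S" "j \<in> S'" "i \<notin> S'" using a e(2,3) by (auto simp: Q_def Cs_def)
      note h = this
      have e1: "insert i (S - {j}) = insert i (S' - {j})" using e by simp
      have "S - {j} = insert i (S - {j}) - {i}" using h by auto
      also have "\<dots> = insert i (S' - {j}) - {i}" using e1 by simp
      also have "\<dots> = S' - {j}" using h by auto
      finally have "S - {j} = S' - {j}" .
      then have "S = S'" using h by (metis insert_Diff)
      then show "x = y" using xe ye e by simp
    qed
    show "(\<lambda>(S, p). (insert (snd p) (S - {fst p}), p)) ` Q \<subseteq> TT \<times> Z"
    proof (rule image_subsetI)
      fix x assume x: "x \<in> Q"
      obtain S j i where xe: "x = (S, (j, i))" by (metis prod.collapse)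
      have q: "(S, (j, i)) \<in> Q" using x xe by simp
      then have S: "S \<subseteq> {..<n}" "S \<notin> TT" and j: "j \<in> S" and i: "i < n" "i \<notin> S"
        and T: "insert i (S - {j}) \<in> TT" by (auto simp: Q_def Cs_def)
      have f: "finite S" using S(1) by (rule finite_sub)
      have "j < k \<or> i < k"
      proof (rule ccontr)
        assume "\<not> (j < k \<or> i < k)"
        then have "k \<le> i" "k \<le> j" by auto
        note mk = move_k[OF this j i(2) f]
        have "S \<in> TT" using T S(1) mk unfolding TT_def by auto
        then show False using S(2) by simp
      qed
      then have "(j, i) \<in> Z" unfolding Z_def using j S(1) i by auto
      then show "(\<lambda>(S, p). (insert (snd p) (S - {fst p}), p)) x \<in> TT \<times> Z" using T xe by simp
    qed
    show "finite (TT \<times> Z)" using TT_fin by (simp add: Z_def)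
  qed
  then have "card Q \<le> card TT * card Z" by (simp add: card_cartesian_product)
  then have "real (card Q) \<le> real (card TT) * real (card Z)" by (metis of_nat_le_iff of_nat_mult)
  moreover have "real (card Z) \<le> 2 * real n * real k"
  proof -
    have "card Z \<le> card ({..<n} \<times> {..<k}) + card ({..<k} \<times> {..<n})" unfolding Z_def by (rule card_Un_le)
    then have "card Z \<le> 2 * n * k" by (simp add: card_cartesian_product mult.commute)
    then show ?thesis by (metis of_nat_le_iff of_nat_mult of_nat_numeral)
  qed
  ultimately have "real (card Q) \<le> real (card TT) * (2 * real n * real k)"
    using mult_left_mono[of "real (card Z)" "2 * real n * real k" "real (card TT)"] by linarith
  then have "(2 * real n / bb) * real (card Q) \<le> (2 * real n / bb) * (real (card TT) * (2 * real n * real k))"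
    using bb_pos by (intro mult_left_mono) auto
  with A have "nrm n EE \<le> (2 * real n / bb) * (real (card TT) * (2 * real n * real k))" by linarith
  also have "\<dots> = 4 * real n * real n * real k" using bb_pos by (simp add: card_TT bb_def[symmetric])
  also have "\<dots> \<le> 4 * real n ^ 3" using kn by (simp add: power3_eq_cube mult_left_mono)
  finally show ?thesis by simp
qed

end

lemma nrm_scale: "nrm n (\<lambda>S. a * v S) = (cmod a)^2 * nrm n v"
  unfolding nrm_def by (simp add: norm_mult power_mult_distrib sum_distrib_left)

context xi_setup
begin

definition cc :: real where
  "cc = 2 * (real (l + M) * (real n - real (l + M) + 1) - real (l + M + M * (n - k - M)))"

lemma main_bounds:
  shows "\<forall>x\<le>n div 2. pmf_p n (l + M) k l x \<ge> 0"
    and "(\<Sum>x\<le>n div 2. pmf_p n (l + M) k l x) = 1"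
    and "(\<Sum>x\<le>n div 2. (lam n x - cc)^2 * pmf_p n (l + M) k l x) \<le> 16 * real n ^ 3"
proof -
  have le: "l + M \<le> n" using lk kn Mle by linarith
  obtain vv where vv: "\<forall>x. vv x \<in> isotypic n x" "XX = (\<lambda>S. \<Sum>x\<le>n div 2. vv x S)"
    using decomp[OF Xi_hom le] by blast
  interpret D: decomp_data n XX vv by unfold_locales (use vv in auto)
  have p: "pmf_p n (l + M) k l x = nrm n (vv x)" if "x \<le> n div 2" for x
    unfolding pmf_p_def using D.pmf_val[OF that] .
  show "\<forall>x\<le>n div 2. pmf_p n (l + M) k l x \<ge> 0" using p nrm_nonneg by simp
  show "(\<Sum>x\<le>n div 2. pmf_p n (l + M) k l x) = 1"
    using D.total Xi_nrm p by simp
  have "(\<Sum>x\<le>n div 2. (lam n x - cc)^2 * pmf_p n (l + M) k l x) = nrm n (\<lambda>S. Kop n XX S - of_real cc * XX S)"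
    using D.second_moment[of cc] p by simp
  also have "(\<lambda>S. Kop n XX S - of_real cc * XX S) = (\<lambda>S. (-2) * EE S)"
  proof
    fix S
    have cc: "complex_of_real cc = 2 * (of_nat (l + M) * (of_nat n - of_nat (l + M) + 1)) - 2 * c0"
      unfolding cc_def c0_def by simp
    show "Kop n XX S - of_real cc * XX S = (-2) * EE S"
      unfolding K_hom[OF Xi_hom] cc EE_def by (simp add: algebra_simps)
  qed
  also have "nrm n (\<lambda>S. (-2) * EE S) = 4 * nrm n EE" using nrm_scale[of n "-2" EE] by simp
  also have "\<dots> \<le> 16 * real n ^ 3" using EE_nrm by simp
  finally show "(\<Sum>x\<le>n div 2. (lam n x - cc)^2 * pmf_p n (l + M) k l x) \<le> 16 * real n ^ 3" .
qed

end

lemma real_nat_floor_int: "(z::real) \<in> \<int> \<Longrightarrow> z \<ge> 0 \<Longrightarrow> real (nat \<lfloor>z\<rfloor>) = z"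
  by (metis Ints_cases floor_of_int of_int_0_le_iff of_int_of_nat_eq of_nat_nat)

lemma bad_bound:
  fixes x n \<mu> s \<epsilon> :: real
  assumes mu: "0 \<le> \<mu>" "\<mu> \<le> 1/2" and s: "s = \<mu> * (1 - \<mu>)" and n: "n > 0" and x: "0 \<le> x" "x \<le> n / 2"
    and bad: "\<bar>x / n - \<mu>\<bar> > \<epsilon>" and e: "\<epsilon> > 0" and nb: "n \<ge> 2 / \<epsilon>^2"
  shows "\<bar>2 * x * (n - x + 1) - 2 * s * n^2\<bar> \<ge> \<epsilon>^2 * n^2"
proof -
  define t where "t = x / n"
  have t: "0 \<le> t" "t \<le> 1/2" using x n unfolding t_def by (auto simp: field_simps)
  have xt: "x = t * n" using n unfolding t_def by simp
  have a1: "\<bar>t - \<mu>\<bar> > \<epsilon>" using bad unfolding t_def .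
  have a2: "\<bar>1 - t - \<mu>\<bar> \<ge> \<bar>t - \<mu>\<bar>" using t mu by auto
  have "\<bar>(t - \<mu>) * (1 - t - \<mu>)\<bar> \<ge> \<epsilon> * \<epsilon>"
    unfolding abs_mult using a1 a2 e by (intro mult_mono) auto
  then have A: "\<bar>n^2 * ((t - \<mu>) * (1 - t - \<mu>))\<bar> \<ge> n^2 * (\<epsilon> * \<epsilon>)"
    unfolding abs_mult using n by (simp add: mult_left_mono)
  have eq: "x * (n - x + 1) - s * n^2 = n^2 * ((t - \<mu>) * (1 - t - \<mu>)) + x"
    unfolding s xt by (simp add: algebra_simps power2_eq_square)
  have "x \<le> n" using x n by simp
  moreover have "n \<le> n^2 * \<epsilon>^2 / 2"
  proof -
    have "n * \<epsilon>^2 \<ge> 2" using nb e by (simp add: field_simps)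
    then have "n * (n * \<epsilon>^2) \<ge> n * 2" using n by (intro mult_left_mono) auto
    then show ?thesis by (simp add: power2_eq_square algebra_simps)
  qed
  moreover
  define a where "a = n^2 * ((t - \<mu>) * (1 - t - \<mu>))"
  have tri: "\<bar>a + x\<bar> \<ge> \<bar>a\<bar> - x" using x(1) by (auto simp: abs_if)
  have A': "\<bar>a\<bar> \<ge> n^2 * \<epsilon>^2" using A unfolding a_def by (simp add: power2_eq_square)
  ultimately have "\<bar>x * (n - x + 1) - s * n^2\<bar> \<ge> n^2 * \<epsilon>^2 / 2"
    unfolding eq a_def[symmetric] using tri A' by linarith
  moreover have "2 * x * (n - x + 1) - 2 * s * n^2 = 2 * (x * (n - x + 1) - s * n^2)" by (simp add: algebra_simps)
  ultimately show ?thesis by (simp only: abs_mult) (simp add: mult.commute)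
qed

lemma mu_facts:
  fixes \<alpha> \<beta> \<gamma> \<delta> :: real
  assumes "\<alpha> \<ge> 0" "\<beta> \<ge> 0" "\<gamma> \<ge> 0" "\<delta> \<ge> 0" "\<alpha> + \<beta> + \<gamma> + \<delta> = 1"
  defines "s \<equiv> \<alpha> * \<gamma> + \<alpha> * \<delta> + \<beta> * \<gamma>"
  defines "\<mu> \<equiv> (1 - sqrt (1 - 4 * s)) / 2"
  shows "0 \<le> \<mu>" "\<mu> \<le> 1/2" "s = \<mu> * (1 - \<mu>)"
proof -
  have s2: "s = (\<alpha> + \<beta>) * (\<gamma> + \<delta>) - \<beta> * \<delta>" unfolding s_def by (simp add: algebra_simps)
  have "4 * ((\<alpha> + \<beta>) * (\<gamma> + \<delta>)) = (\<alpha> + \<beta> + \<gamma> + \<delta>)^2 - (\<alpha> + \<beta> - \<gamma> - \<delta>)^2"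
    by (simp add: algebra_simps power2_eq_square)
  also have "\<dots> \<le> 1" using assms(5) by simp
  finally have h4: "4 * ((\<alpha> + \<beta>) * (\<gamma> + \<delta>)) \<le> 1" .
  have "\<beta> * \<delta> \<ge> 0" using assms(2,4) by simp
  then have "4 * s \<le> 1" unfolding s2 using h4 by (simp only: right_diff_distrib)
  moreover have "s \<ge> 0" unfolding s_def using assms(1-4) by simp
  ultimately have D: "0 \<le> 1 - 4 * s" "1 - 4 * s \<le> 1" by auto
  then have q: "0 \<le> sqrt (1 - 4 * s)" "sqrt (1 - 4 * s) \<le> 1" by auto
  show "0 \<le> \<mu>" "\<mu> \<le> 1/2" unfolding \<mu>_def using q by auto
  have "\<mu> * (1 - \<mu>) = (1 - (sqrt (1 - 4 * s))^2) / 4" unfolding \<mu>_def by (simp add: field_simps power2_eq_square)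
  also have "(sqrt (1 - 4 * s))^2 = 1 - 4 * s" using D by simp
  finally show "s = \<mu> * (1 - \<mu>)" by simp
qed

lemma per_n:
  fixes \<alpha> \<beta> \<gamma> \<delta> :: real and n :: nat
  assumes abcd: "\<alpha> \<ge> 0" "\<beta> \<ge> 0" "\<gamma> \<ge> 0" "\<delta> \<ge> 0" "\<alpha> + \<beta> + \<gamma> + \<delta> = 1"
    and ints: "\<alpha> * real n \<in> \<int>" "(\<alpha> + \<beta>) * real n \<in> \<int>" "(\<alpha> + \<gamma>) * real n \<in> \<int>"
  defines "l \<equiv> nat \<lfloor>\<alpha> * real n\<rfloor>" and "m \<equiv> nat \<lfloor>(\<alpha> + \<beta>) * real n\<rfloor>" and "k \<equiv> nat \<lfloor>(\<alpha> + \<gamma>) * real n\<rfloor>"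
    and "\<mu> \<equiv> (1 - sqrt (1 - 4 * (\<alpha> * \<gamma> + \<alpha> * \<delta> + \<beta> * \<gamma>))) / 2"
  shows "(\<forall>x\<le>n div 2. pmf_p n m k l x \<ge> 0) \<and> (\<Sum>x\<le>n div 2. pmf_p n m k l x) = 1"
    and "\<epsilon> > 0 \<Longrightarrow> n > 0 \<Longrightarrow> real n \<ge> 2 / \<epsilon>^2 \<Longrightarrow>
      (\<Sum>x\<in>{x. x \<le> n div 2 \<and> \<bar>real x / real n - \<mu>\<bar> > \<epsilon>}. pmf_p n m k l x) \<le> 16 / (\<epsilon>^4 * real n)"
proof -
  have rl: "real l = \<alpha> * real n" unfolding l_def using ints(1) abcd by (intro real_nat_floor_int) auto
  have rm: "real m = (\<alpha> + \<beta>) * real n" unfolding m_def using ints(2) abcd by (intro real_nat_floor_int) auto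
  have rk: "real k = (\<alpha> + \<gamma>) * real n" unfolding k_def using ints(3) abcd by (intro real_nat_floor_int) auto
  have "real l \<le> real k" using rl rk abcd by (simp add: distrib_right)
  then have lk: "l \<le> k" by simp
  have "real l \<le> real m" using rl rm abcd by (simp add: distrib_right)
  then have lm: "l \<le> m" by simp
  have kn: "k \<le> n"
  proof -
    have "(\<alpha> + \<gamma>) * real n \<le> 1 * real n" using abcd by (intro mult_right_mono) auto
    then have "real k \<le> real n" using rk by simp
    then show ?thesis by simp
  qed
  define M where "M = m - l"
  have rM: "real M = \<beta> * real n" unfolding M_def using rl rm lm by (simp add: of_nat_diff algebra_simps)
  have Mle: "M \<le> n - k"
  proof -
    have "\<beta> * real n + (\<alpha> + \<gamma>) * real n \<le> 1 * real n" unfolding distrib_right[symmetric]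
      using abcd by (intro mult_right_mono) auto
    then have "real M + real k \<le> real n" using rM rk by simp
    then show ?thesis by linarith
  qed
  have mlM: "m = l + M" unfolding M_def using lm by simp
  interpret X: xi_setup n k l M by unfold_locales (use lk kn Mle in auto)
  note mb = X.main_bounds[folded mlM]
  show "(\<forall>x\<le>n div 2. pmf_p n m k l x \<ge> 0) \<and> (\<Sum>x\<le>n div 2. pmf_p n m k l x) = 1"
    using mb(1,2) by simp
  define s where "s = \<alpha> * \<gamma> + \<alpha> * \<delta> + \<beta> * \<gamma>"
  note muf = mu_facts[OF abcd, folded s_def, folded \<mu>_def[folded s_def]]
  have cc: "X.cc = 2 * s * (real n)^2"
  proof -
    have "real (n - k - M) = real n - real k - real M" using Mle kn by (simp add: of_nat_diff)
    then have "X.cc = 2 * (real m * (real n - real m + 1) - (real m + real M * (real n - real k - real M)))"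
      unfolding X.cc_def mlM[symmetric] by simp
    also have "\<dots> = 2 * s * (real n)^2"
    proof -
      have d: "\<delta> = 1 - \<alpha> - \<beta> - \<gamma>" using abcd(5) by simp
      show ?thesis unfolding rm rM rk s_def d by (simp add: algebra_simps power2_eq_square)
    qed
    finally show ?thesis .
  qed
  assume e: "\<epsilon> > 0" and n0: "n > 0" and nb: "real n \<ge> 2 / \<epsilon>^2"
  let ?B = "{x. x \<le> n div 2 \<and> \<bar>real x / real n - \<mu>\<bar> > \<epsilon>}"
  have np: "real n > 0" using n0 by simp
  have big: "(lam n x - X.cc)^2 \<ge> \<epsilon>^4 * (real n)^4" if x: "x \<in> ?B" for x
  proof -
    have "x \<le> n div 2" using x by simp
    then have "2 * x \<le> n" by presburger
    then have "real (2 * x) \<le> real n" by (simp only: of_nat_le_iff)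
    then have xle: "real x \<le> real n / 2" by simp
    have "\<bar>2 * real x * (real n - real x + 1) - 2 * s * (real n)^2\<bar> \<ge> \<epsilon>^2 * (real n)^2"
      by (rule bad_bound[OF muf(1,2) muf(3) np _ xle _ e nb]) (use x in auto)
    then have "\<bar>lam n x - X.cc\<bar> \<ge> \<epsilon>^2 * (real n)^2" unfolding lam_def cc .
    moreover have h0: "0 \<le> \<epsilon>^2 * (real n)^2" by simp
    ultimately have "(\<epsilon>^2 * (real n)^2)^2 \<le> \<bar>lam n x - X.cc\<bar>^2" by (rule power_mono)
    then have "(\<epsilon>^2 * (real n)^2)^2 \<le> (lam n x - X.cc)^2" by simp
    then show ?thesis by (simp add: power_mult_distrib flip: power_mult)
  qed
  have pos: "\<epsilon>^4 * (real n)^4 > 0" using e np by simp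
  have "(\<Sum>x\<in>?B. pmf_p n m k l x) \<le> (\<Sum>x\<in>?B. (lam n x - X.cc)^2 * pmf_p n m k l x / (\<epsilon>^4 * (real n)^4))"
  proof (rule sum_mono)
    fix x assume x: "x \<in> ?B"
    have p0: "pmf_p n m k l x \<ge> 0" using mb(1) x by auto
    have "1 * pmf_p n m k l x \<le> ((lam n x - X.cc)^2 / (\<epsilon>^4 * (real n)^4)) * pmf_p n m k l x"
      using big[OF x] pos p0 by (intro mult_right_mono) (simp_all add: field_simps)
    then show "pmf_p n m k l x \<le> (lam n x - X.cc)^2 * pmf_p n m k l x / (\<epsilon>^4 * (real n)^4)" by simp
  qed
  also have "\<dots> \<le> (\<Sum>x\<le>n div 2. (lam n x - X.cc)^2 * pmf_p n m k l x / (\<epsilon>^4 * (real n)^4))"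
    by (rule sum_mono2) (use mb(1) pos in \<open>auto intro!: divide_nonneg_pos mult_nonneg_nonneg\<close>)
  also have "\<dots> = (\<Sum>x\<le>n div 2. (lam n x - X.cc)^2 * pmf_p n m k l x) / (\<epsilon>^4 * (real n)^4)"
    by (simp add: sum_divide_distrib)
  also have "\<dots> \<le> 16 * real n ^ 3 / (\<epsilon>^4 * (real n)^4)"
    using mb(3) pos by (intro divide_right_mono) auto
  also have "\<dots> = 16 / (\<epsilon>^4 * real n)" using np by (simp add: field_simps power_numeral_reduce)
  finally show "(\<Sum>x\<in>?B. pmf_p n m k l x) \<le> 16 / (\<epsilon>^4 * real n)" .
qed

theorem theorem5p6:
  fixes \<alpha> \<beta> \<gamma> \<delta> :: real
  assumes "\<alpha> \<ge> 0" "\<beta> \<ge> 0" "\<gamma> \<ge> 0" "\<delta> \<ge> 0" "\<alpha> + \<beta> + \<gamma> + \<delta> = 1"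
  defines "\<mu> \<equiv> (1 - sqrt (1 - 4 * (\<alpha> * \<gamma> + \<alpha> * \<delta> + \<beta> * \<gamma>))) / 2"
      and "F \<equiv> inf sequentially (principal {n::nat. \<alpha> * real n \<in> \<int> \<and> (\<alpha> + \<beta>) * real n \<in> \<int> \<and> (\<alpha> + \<gamma>) * real n \<in> \<int>})"
      and "l \<equiv> \<lambda>n::nat. nat \<lfloor>\<alpha> * real n\<rfloor>"
      and "m \<equiv> \<lambda>n::nat. nat \<lfloor>(\<alpha> + \<beta>) * real n\<rfloor>"
      and "k \<equiv> \<lambda>n::nat. nat \<lfloor>(\<alpha> + \<gamma>) * real n\<rfloor>"
  shows "(\<forall>\<epsilon>>0. ((\<lambda>n. \<Sum>x\<in>{x. x \<le> n div 2 \<and> \<bar>real x / real n - \<mu>\<bar> > \<epsilon>}. pmf_p n (m n) (k n) (l n) x)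
              \<longlongrightarrow> 0) F)
       \<and> (\<lambda>n. (\<Sum>x\<le>n div 2. real x * pmf_p n (m n) (k n) (l n) x) - real n * \<mu>) \<in> o[F](\<lambda>n. real n)"
proof -
  let ?P = "{n::nat. \<alpha> * real n \<in> \<int> \<and> (\<alpha> + \<beta>) * real n \<in> \<int> \<and> (\<alpha> + \<gamma>) * real n \<in> \<int>}"
  define p where "p n x = pmf_p n (m n) (k n) (l n) x" for n x
  define B where "B n \<epsilon> = {x. x \<le> n div 2 \<and> \<bar>real x / real n - \<mu>\<bar> > \<epsilon>}" for n :: nat and \<epsilon> :: real
  note muf = mu_facts[OF assms(1-5)]
  have mu: "0 \<le> \<mu>" "\<mu> \<le> 1/2" using muf(1,2) unfolding \<mu>_def by auto
  have Fle: "F \<le> sequentially" unfolding F_def by simp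
  have key: "eventually (\<lambda>n. (\<forall>x\<le>n div 2. p n x \<ge> 0) \<and> (\<Sum>x\<le>n div 2. p n x) = 1
      \<and> (\<Sum>x\<in>B n \<epsilon>. p n x) \<le> 16 / (\<epsilon>^4 * real n) \<and> n > 0) F" if e: "\<epsilon> > 0" for \<epsilon>
  proof -
    obtain N :: nat where N: "real N \<ge> 2 / \<epsilon>^2" by (meson real_arch_simple)
    have "\<forall>n\<ge>Suc N. n \<in> ?P \<longrightarrow> (\<forall>x\<le>n div 2. p n x \<ge> 0) \<and> (\<Sum>x\<le>n div 2. p n x) = 1
      \<and> (\<Sum>x\<in>B n \<epsilon>. p n x) \<le> 16 / (\<epsilon>^4 * real n) \<and> n > 0"
    proof (intro allI impI)
      fix n assume n: "Suc N \<le> n" "n \<in> ?P"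
      then have ints: "\<alpha> * real n \<in> \<int>" "(\<alpha> + \<beta>) * real n \<in> \<int>" "(\<alpha> + \<gamma>) * real n \<in> \<int>" by auto
      note pn = per_n[OF assms(1-5) ints]
      have "real n \<ge> 2 / \<epsilon>^2" using N n(1) by linarith
      moreover have "n > 0" using n(1) by simp
      ultimately show "(\<forall>x\<le>n div 2. p n x \<ge> 0) \<and> (\<Sum>x\<le>n div 2. p n x) = 1
        \<and> (\<Sum>x\<in>B n \<epsilon>. p n x) \<le> 16 / (\<epsilon>^4 * real n) \<and> n > 0"
        using pn(1) pn(2)[OF e] unfolding p_def B_def l_def m_def k_def \<mu>_def by simp
    qed
    then show ?thesis unfolding F_def eventually_inf_principal eventually_sequentially by blast
  qed
  have part1: "((\<lambda>n. \<Sum>x\<in>B n \<epsilon>. p n x) \<longlongrightarrow> 0) F" if e: "\<epsilon> > 0" for \<epsilon>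
  proof (rule tendsto_sandwich[where f = "\<lambda>_. 0" and h = "\<lambda>n. (16 / \<epsilon>^4) / real n"])
    show "eventually (\<lambda>n. 0 \<le> (\<Sum>x\<in>B n \<epsilon>. p n x)) F"
      using key[OF e] by eventually_elim (auto intro!: sum_nonneg simp: B_def)
    show "eventually (\<lambda>n. (\<Sum>x\<in>B n \<epsilon>. p n x) \<le> (16 / \<epsilon>^4) / real n) F"
      using key[OF e] by eventually_elim simp
    show "((\<lambda>_. 0) \<longlongrightarrow> (0::real)) F" by simp
    show "((\<lambda>n. (16 / \<epsilon>^4) / real n) \<longlongrightarrow> 0) F"
      by (rule tendsto_mono[OF Fle]) (rule lim_const_over_n)
  qed
  have part2: "(\<lambda>n. (\<Sum>x\<le>n div 2. real x * p n x) - real n * \<mu>) \<in> o[F](\<lambda>n. real n)"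
  proof (rule landau_o.smallI)
    fix c :: real assume c: "c > 0"
    define \<epsilon> where "\<epsilon> = c / 2"
    have e: "\<epsilon> > 0" using c by (simp add: \<epsilon>_def)
    obtain N2 :: nat where N2: "real N2 \<ge> 16 / \<epsilon>^5" by (meson real_arch_simple)
    have ev2: "eventually (\<lambda>n. real n \<ge> 16 / \<epsilon>^5) F"
      by (rule filter_leD[OF Fle]) (use N2 in \<open>auto simp: eventually_sequentially intro!: exI[of _ N2]\<close>)
    show "eventually (\<lambda>n. norm ((\<Sum>x\<le>n div 2. real x * p n x) - real n * \<mu>) \<le> c * norm (real n)) F"
      using key[OF e] ev2
    proof eventually_elim
      case (elim n)
      then have p0: "\<And>x. x \<le> n div 2 \<Longrightarrow> p n x \<ge> 0" and p1: "(\<Sum>x\<le>n div 2. p n x) = 1"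
        and pB: "(\<Sum>x\<in>B n \<epsilon>. p n x) \<le> 16 / (\<epsilon>^4 * real n)" and n0: "n > 0" and nb: "real n \<ge> 16 / \<epsilon>^5"
        by auto
      have np: "real n > 0" using n0 by simp
      have "(\<Sum>x\<le>n div 2. real x * p n x) - real n * \<mu> = (\<Sum>x\<le>n div 2. (real x - real n * \<mu>) * p n x)"
        using p1 by (simp add: left_diff_distrib sum_subtractf flip: sum_distrib_left)
      also have "\<bar>\<dots>\<bar> \<le> (\<Sum>x\<le>n div 2. \<bar>real x - real n * \<mu>\<bar> * p n x)"
        using p0 by (auto intro!: order_trans[OF sum_abs] sum_mono simp: abs_mult)
      also have "\<dots> \<le> (\<Sum>x\<le>n div 2. (\<epsilon> * real n + (if x \<in> B n \<epsilon> then real n else 0)) * p n x)"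
      proof (rule sum_mono)
        fix x assume x: "x \<in> {..n div 2}"
        have xle: "real x \<le> real n / 2"
        proof -
          have "2 * x \<le> n" using x by auto
          then have "real (2 * x) \<le> real n" by (simp only: of_nat_le_iff)
          then show ?thesis by simp
        qed
        have "\<bar>real x - real n * \<mu>\<bar> \<le> \<epsilon> * real n + (if x \<in> B n \<epsilon> then real n else 0)"
        proof (cases "x \<in> B n \<epsilon>")
          case True
          have "0 \<le> real n * \<mu>" "real n * \<mu> \<le> real n / 2" using mu np by (auto simp: mult_left_mono)
          then have "\<bar>real x - real n * \<mu>\<bar> \<le> real n" using xle by auto
          moreover have "\<epsilon> * real n \<ge> 0" using e np by simp
          ultimately show ?thesis using True by simp
        next
          case False
          then have "\<bar>real x / real n - \<mu>\<bar> \<le> \<epsilon>" using x by (auto simp: B_def)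
          then have "\<bar>real n * (real x / real n - \<mu>)\<bar> \<le> real n * \<epsilon>" unfolding abs_mult using np by (simp add: mult_left_mono)
          moreover have "real n * (real x / real n - \<mu>) = real x - real n * \<mu>" using np by (simp add: field_simps)
          ultimately show ?thesis using False by (simp add: mult.commute)
        qed
        then show "\<bar>real x - real n * \<mu>\<bar> * p n x \<le> (\<epsilon> * real n + (if x \<in> B n \<epsilon> then real n else 0)) * p n x"
          using p0 x by (intro mult_right_mono) auto
      qed
      also have "\<dots> = \<epsilon> * real n * (\<Sum>x\<le>n div 2. p n x) + real n * (\<Sum>x\<in>B n \<epsilon>. p n x)"
      proof -
        have "(\<Sum>x\<le>n div 2. (if x \<in> B n \<epsilon> then real n else 0) * p n x) = (\<Sum>x\<in>B n \<epsilon>. real n * p n x)"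
        proof -
          have "(\<Sum>x\<le>n div 2. (if x \<in> B n \<epsilon> then real n else 0) * p n x)
              = (\<Sum>x\<le>n div 2. if x \<in> B n \<epsilon> then real n * p n x else 0)" by (intro sum.cong) auto
          also have "\<dots> = (\<Sum>x\<in>{x \<in> {..n div 2}. x \<in> B n \<epsilon>}. real n * p n x)"
            by (rule sum.inter_filter[symmetric]) simp
          also have "{x \<in> {..n div 2}. x \<in> B n \<epsilon>} = B n \<epsilon>" by (auto simp: B_def)
          finally show ?thesis .
        qed
        then show ?thesis by (simp add: distrib_right sum.distrib sum_distrib_left)
      qed
      also have "\<dots> \<le> \<epsilon> * real n + real n * (16 / (\<epsilon>^4 * real n))"
      proof -
        have "real n * (\<Sum>x\<in>B n \<epsilon>. p n x) \<le> real n * (16 / (\<epsilon>^4 * real n))"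
          using pB np by (intro mult_left_mono) auto
        then show ?thesis using p1 by simp
      qed
      also have "\<dots> = \<epsilon> * real n + 16 / \<epsilon>^4" using np by simp
      also have "\<dots> \<le> \<epsilon> * real n + \<epsilon> * real n"
      proof -
        have p5: "\<epsilon>^5 = \<epsilon> * \<epsilon>^4" by (simp add: power_numeral_reduce)
        have "16 / \<epsilon>^4 = \<epsilon> * (16 / \<epsilon>^5)" using e unfolding p5 by (simp add: field_simps)
        also have "\<dots> \<le> \<epsilon> * real n" using nb e by (intro mult_left_mono) auto
        finally show ?thesis by simp
      qed
      also have "\<dots> = c * norm (real n)" unfolding \<epsilon>_def by simp
      finally show ?case by simp
    qed
  qed
  show ?thesis using part1 part2 unfolding p_def B_def by blast
qed

end
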